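(* Let $\mathfrak g$ be a Lie algebra with a Cartan subalgebra $\mathfrak h$ and a root decomposition with roots $\Delta$. Any parabolic decomposition $\Delta=\Delta^-\sqcup\Delta^0\sqcup\Delta^+$ is determined by some oriented $\langle\Delta^0\rangle_{\mathbb R}$-maximal chain of vector subspaces in $\langle\Delta\rangle_{\mathbb R}$; conversely, for an arbitrary subspace $V'$ of $\langle\Delta\rangle_{\mathbb R}$, any oriented $V'$-maximal chain in $\langle\Delta\rangle_{\mathbb R}$ defines a unique parabolic decomposition of $\Delta$ with $\Delta^0=\Delta\cap V'$.
   Context: $\langle S\rangle_{\mathbb R}$ denotes real span. For a subspace $V'\subset\langle\Delta\rangle_{\mathbb R}$ (resp. for $\langle\Delta^0\rangle_{\mathbb R}$) let $\Pi$ be the projection $\langle\Delta\rangle_{\mathbb R}\to\langle\Delta\rangle_{\mathbb R}/V'$. A decomposition $\Delta=\Delta^-\sqcup\Delta^0\sqcup\Delta^+$ is parabolic if, with $\Pi:\langle\Delta\rangle_{\mathbb R}\to\langle\Delta\rangle_{\mathbb R}/\langle\Delta^0\rangle_{\mathbb R}$, one has $\Pi(\Delta^-)\cap\Pi(\Delta^+)=\emptyset$, $0\notin\Pi(\Delta^\pm)$, and $\Pi(\Delta)\setminus\{0\}=\Pi(\Delta^-)\sqcup\Pi(\Delta^+)$ is a triangular decomposition, i.e. the cone of nonnegative real combinations of $\Pi(\Delta^+)\cup-\Pi(\Delta^-)$ contains no nonzero vector subspace. A chain of subspaces of a real vector space is a set of subspaces totally ordered by proper inclusion, maximal if not contained in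 a larger chain; a basic chain is a chain minimal with the property that every vector $x$ lies in $G_b\setminus G_a$ for some members $G_a\subset G_b$ with $\dim G_b/G_a=1$; each maximal chain contains a unique basic subchain; an orientation is a labeling by $\pm$ of the two half-spaces of $G_b\setminus G_a$ for each such codimension-one pair of the basic subchain. An (oriented) $V'$-maximal chain in $\langle\Delta\rangle_{\mathbb R}$ is the preimage under $\Pi$ of an (oriented) maximal chain in $\langle\Delta\rangle_{\mathbb R}/V'$. An oriented maximal chain in $\langle\Delta\rangle_{\mathbb R}/V'$ defines an $\mathbb R$-linear order on that quotient ($y>0$ iff $y$ lies in the $+$ half of $G_b\setminus G_a$ for the codimension-one pair with $y\in G_b\setminus G_a$), and the associated decomposition is $\Delta^0=\Delta\cap V'$, $\Delta^\pm=\{\alpha\in\Delta\setminus V':\pm\Pi(\alpha)>0\}$. *)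

theory Defs
  imports Complex_Main
begin

text \<open>Roots are modelled as a set \<open>\<Delta>\<close> of nonzero vectors in a real vector space
(e.g. the dual of a Cartan subalgebra viewed as a real vector space).
\<open>span\<close> is the real span.  Subspaces of the quotient \<open>span \<Delta> / V'\<close> are represented by
their preimages, i.e. subspaces \<open>G\<close> with \<open>V' \<subseteq> G \<subseteq> span \<Delta>\<close>; \<open>\<Pi>(X) \<subseteq> \<Pi>(Y)\<close>
is rendered as \<open>X \<subseteq> Y + V'\<close> etc.\<close>

definition nonneg_comb :: "'v::real_vector set \<Rightarrow> 'v set" where
  "nonneg_comb S = {y. \<exists>F c. finite F \<and> F \<subseteq> S \<and> (\<forall>x\<in>F. 0 \<le> c x) \<and> y = (\<Sum>x\<in>F. c x *\<^sub>R x)}"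

text \<open>Parabolic decomposition \<open>\<Delta> = Dm \<sqcup> D0 \<sqcup> Dp\<close>, with \<open>\<Pi>\<close> the projection modulo
\<open>span D0\<close>.\<close>
definition parabolic :: "'v::real_vector set \<Rightarrow> 'v set \<Rightarrow> 'v set \<Rightarrow> 'v set \<Rightarrow> bool" where
  "parabolic \<Delta> Dm D0 Dp \<longleftrightarrow>
     \<Delta> = Dm \<union> D0 \<union> Dp \<and> Dm \<inter> D0 = {} \<and> Dm \<inter> Dp = {} \<and> D0 \<inter> Dp = {} \<and>
     \<comment> \<open>\<Pi>(Dm) \<inter> \<Pi>(Dp) = \<emptyset>\<close>
     (\<forall>a\<in>Dm. \<forall>b\<in>Dp. a - b \<notin> span D0) \<and>
     \<comment> \<open>0 \<notin> \<Pi>(D\<pm>)\<close>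
     (\<forall>a\<in>Dm. a \<notin> span D0) \<and> (\<forall>b\<in>Dp. b \<notin> span D0) \<and>
     \<comment> \<open>the cone spanned by \<Pi>(Dp) \<union> -\<Pi>(Dm) contains no nonzero subspace of the quotient\<close>
     \<not> (\<exists>S. subspace S \<and> span D0 \<subset> S \<and>
            S \<subseteq> {k + w | k w. k \<in> nonneg_comb (Dp \<union> uminus ` Dm) \<and> w \<in> span D0})"

definition quot_chain :: "'v::real_vector set \<Rightarrow> 'v set \<Rightarrow> 'v set set \<Rightarrow> bool" where
  "quot_chain W V' C \<longleftrightarrow>
     (\<forall>G\<in>C. subspace G \<and> V' \<subseteq> G \<and> G \<subseteq> W) \<and> (\<forall>G\<in>C. \<forall>H\<in>C. G \<subseteq> H \<or> H \<subseteq> G)"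

definition quot_max_chain :: "'v::real_vector set \<Rightarrow> 'v set \<Rightarrow> 'v set set \<Rightarrow> bool" where
  "quot_max_chain W V' C \<longleftrightarrow> quot_chain W V' C \<and> \<not> (\<exists>C'. quot_chain W V' C' \<and> C \<subset> C')"

definition codim_one :: "'v::real_vector set \<Rightarrow> 'v set \<Rightarrow> bool" where
  "codim_one A B \<longleftrightarrow> A \<subseteq> B \<and> (\<exists>v. v \<notin> A \<and> B = {a + t *\<^sub>R v | a t. a \<in> A})"

definition codim_one_pair :: "'v::real_vector set set \<Rightarrow> 'v set \<Rightarrow> 'v set \<Rightarrow> bool" where
  "codim_one_pair C A B \<longleftrightarrow> A \<in> C \<and> B \<in> C \<and> codim_one A B"

definition half_space :: "'v::real_vector set \<Rightarrow> 'v set \<Rightarrow> 'v set \<Rightarrow> bool" where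
  "half_space A B H \<longleftrightarrow> (\<exists>v\<in>B - A. H = {a + t *\<^sub>R v | a t. a \<in> A \<and> 0 < t})"

text \<open>An orientation of the maximal chain \<open>C\<close>: for each codimension-one pair \<open>(A,B)\<close>
(these are exactly the codimension-one pairs of the basic subchain) the half of
\<open>B - A\<close> labelled \<open>+\<close>; the other half is labelled \<open>-\<close>.\<close>
definition orientation :: "'v::real_vector set set \<Rightarrow> ('v set \<Rightarrow> 'v set \<Rightarrow> 'v set) \<Rightarrow> bool" where
  "orientation C ori \<longleftrightarrow> (\<forall>A B. codim_one_pair C A B \<longrightarrow> half_space A B (ori A B))"

definition oriented_max_chain ::
  "'v::real_vector set \<Rightarrow> 'v set \<Rightarrow> 'v set set \<Rightarrow> ('v set \<Rightarrow> 'v set \<Rightarrow> 'v set) \<Rightarrow> bool" where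
  "oriented_max_chain W V' C ori \<longleftrightarrow> quot_max_chain W V' C \<and> orientation C ori"

definition chain_pos :: "'v::real_vector set set \<Rightarrow> ('v set \<Rightarrow> 'v set \<Rightarrow> 'v set) \<Rightarrow> 'v \<Rightarrow> bool" where
  "chain_pos C ori y \<longleftrightarrow> (\<exists>A B. codim_one_pair C A B \<and> y \<in> B - A \<and> y \<in> ori A B)"

definition assoc_plus :: "'v::real_vector set \<Rightarrow> 'v set \<Rightarrow> 'v set set \<Rightarrow> ('v set \<Rightarrow> 'v set \<Rightarrow> 'v set) \<Rightarrow> 'v set" where
  "assoc_plus \<Delta> V' C ori = {\<alpha> \<in> \<Delta> - V'. chain_pos C ori \<alpha>}"

definition assoc_minus :: "'v::real_vector set \<Rightarrow> 'v set \<Rightarrow> 'v set set \<Rightarrow> ('v set \<Rightarrow> 'v set \<Rightarrow> 'v set) \<Rightarrow> 'v set" where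
  "assoc_minus \<Delta> V' C ori = {\<alpha> \<in> \<Delta> - V'. chain_pos C ori (- \<alpha>)}"

end

theory Submission
  imports Defs
begin


lemma codim_mid:
  assumes "subspace A" "subspace M" "codim_one A B" "A \<subseteq> M" "M \<subseteq> B" "M \<noteq> A"
  shows "M = B"
proof -
  obtain v where v: "v \<notin> A" "B = {a + t *\<^sub>R v | a t. a \<in> A}" using assms(3) unfolding codim_one_def by blast
  obtain b where b: "b \<in> M" "b \<notin> A" using assms(4,6) by blast
  have "b \<in> B" using b assms(5) by blast
  hence "b \<in> {a + t *\<^sub>R v | a t. a \<in> A}" using v(2) by simp
  then obtain a t where at: "b = a + t *\<^sub>R v" "a \<in> A" by blast
  have "t \<noteq> 0" using at b by auto
  have "v = (1/t) *\<^sub>R (b - a)" using at \<open>t \<noteq> 0\<close> by simp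
  moreover have "b - a \<in> M" using b(1) at(2) assms(2,4) real_vector.subspace_diff by blast
  ultimately have vM: "v \<in> M" using assms(2) real_vector.subspace_scale by metis
  have "B \<subseteq> M"
  proof
    fix x assume "x \<in> B"
    hence "x \<in> {a + t *\<^sub>R v | a t. a \<in> A}" using v(2) by simp
    then obtain a' s where "x = a' + s *\<^sub>R v" "a' \<in> A" by blast
    moreover have "s *\<^sub>R v \<in> M" using vM assms(2) real_vector.subspace_scale by blast
    moreover have "a' \<in> M" using \<open>a' \<in> A\<close> assms(4) by blast
    ultimately show "x \<in> M" using assms(2) real_vector.subspace_add by metis
  qed
  thus ?thesis using assms(5) by blast
qed

lemma codim_neq:
  assumes "subspace A" "codim_one A B" shows "A \<noteq> B"
proof -
  obtain v where v: "v \<notin> A" "B = {a + t *\<^sub>R v | a t. a \<in> A}" using assms(2) unfolding codim_one_def by blast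
  have "v = 0 + 1 *\<^sub>R v" "0 \<in> A" using assms(1) real_vector.subspace_0 by auto
  hence "v \<in> {a + t *\<^sub>R v | a t. a \<in> A}" by blast
  hence "v \<in> B" using v(2) by simp
  thus ?thesis using v by blast
qed

lemma pair_cmp1:
  assumes ch: "quot_chain W V' C" and p: "codim_one_pair C A B" and p': "codim_one_pair C A' B'"
    and "B \<subseteq> B'"
  shows "(A = A' \<and> B = B') \<or> B \<subseteq> A'"
proof -
  have sub: "\<And>G. G \<in> C \<Longrightarrow> subspace G" and cmp: "\<And>G H. G \<in> C \<Longrightarrow> H \<in> C \<Longrightarrow> G \<subseteq> H \<or> H \<subseteq> G"
    using ch unfolding quot_chain_def by auto
  have AB: "A \<in> C" "B \<in> C" "codim_one A B" and AB': "A' \<in> C" "B' \<in> C" "codim_one A' B'"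
    using p p' unfolding codim_one_pair_def by auto
  show ?thesis
  proof (cases "B \<subseteq> A'")
    case True thus ?thesis by simp
  next
    case False
    hence "A' \<subseteq> B" using cmp AB AB' by blast
    have "B = B'" using codim_mid[OF sub[OF AB'(1)] sub[OF AB(2)] AB'(3) \<open>A' \<subseteq> B\<close> \<open>B \<subseteq> B'\<close>] False by blast
    have "A = A'"
    proof (cases "A \<subseteq> A'")
      case True
      have "A \<subseteq> B" using AB(3) unfolding codim_one_def by blast
      have "A' \<subseteq> B" by fact
      show ?thesis
      proof (rule ccontr)
        assume "A \<noteq> A'"
        hence "A' = B" using codim_mid[OF sub[OF AB(1)] sub[OF AB'(1)] AB(3) True \<open>A' \<subseteq> B\<close>] by auto
        thus False using codim_neq[OF sub[OF AB'(1)] AB'(3)] \<open>B = B'\<close> by simp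
      qed
    next
      case F2: False
      hence "A' \<subseteq> A" using cmp AB AB' by blast
      have "A \<subseteq> B'" using AB(3) \<open>B = B'\<close> unfolding codim_one_def by blast
      show ?thesis
      proof (rule ccontr)
        assume "A \<noteq> A'"
        hence "A = B'" using codim_mid[OF sub[OF AB'(1)] sub[OF AB(1)] AB'(3) \<open>A' \<subseteq> A\<close> \<open>A \<subseteq> B'\<close>] by auto
        thus False using codim_neq[OF sub[OF AB(1)] AB(3)] \<open>B = B'\<close> by simp
      qed
    qed
    thus ?thesis using \<open>B = B'\<close> by simp
  qed
qed

lemma pair_cmp:
  assumes ch: "quot_chain W V' C" and p: "codim_one_pair C A B" and p': "codim_one_pair C A' B'"
  shows "(A = A' \<and> B = B') \<or> B \<subseteq> A' \<or> B' \<subseteq> A"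
proof -
  have "B \<subseteq> B' \<or> B' \<subseteq> B" using ch p p' unfolding quot_chain_def codim_one_pair_def by blast
  thus ?thesis using pair_cmp1[OF ch p p'] pair_cmp1[OF ch p' p] by blast
qed

lemma pos_decomp:
  assumes "orientation C ori" "chain_pos C ori y"
  obtains A B v a t where "codim_one_pair C A B" "v \<in> B - A"
    "ori A B = {a + t *\<^sub>R v | a t. a \<in> A \<and> 0 < t}" "y \<in> B - A" "a \<in> A" "0 < t" "y = a + t *\<^sub>R v"
proof -
  obtain A B where AB: "codim_one_pair C A B" "y \<in> B - A" "y \<in> ori A B"
    using assms(2) unfolding chain_pos_def by blast
  then obtain v where v: "v \<in> B - A" "ori A B = {a + t *\<^sub>R v | a t. a \<in> A \<and> 0 < t}"
    using assms(1) unfolding orientation_def half_space_def by blast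
  then obtain a t where "a \<in> A" "0 < t" "y = a + t *\<^sub>R v" using AB by blast
  thus ?thesis using that AB v by blast
qed

lemma pos_intro:
  assumes "codim_one_pair C A B" "v \<in> B - A"
    "ori A B = {a + t *\<^sub>R v | a t. a \<in> A \<and> 0 < t}" "y \<in> B - A" "a \<in> A" "0 < t" "y = a + t *\<^sub>R v"
  shows "chain_pos C ori y"
  using assms unfolding chain_pos_def by blast

lemma mem_half: "a \<in> A \<Longrightarrow> 0 < t \<Longrightarrow> x = a + t *\<^sub>R v \<Longrightarrow> x \<in> {a + t *\<^sub>R v | a t. a \<in> A \<and> 0 < t}"
  by blast

lemma pos_intro2:
  "codim_one_pair C A B \<Longrightarrow> y \<in> B - A \<Longrightarrow> y \<in> ori A B \<Longrightarrow> chain_pos C ori y"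
  unfolding chain_pos_def by blast

lemma pos_notin:
  assumes "quot_chain W V' C" "orientation C ori" "chain_pos C ori y" shows "y \<notin> V'"
  using assms unfolding chain_pos_def quot_chain_def codim_one_pair_def by blast

lemma pos_scale:
  assumes ch: "quot_chain W V' C" and o: "orientation C ori" and p: "chain_pos C ori y" and "0 < c"
  shows "chain_pos C ori (c *\<^sub>R y)"
proof -
  obtain A B v a t where d: "codim_one_pair C A B" "v \<in> B - A"
    "ori A B = {a + t *\<^sub>R v | a t. a \<in> A \<and> 0 < t}" "y \<in> B - A" "a \<in> A" "0 < t" "y = a + t *\<^sub>R v"
    by (rule pos_decomp[OF o p])
  have sA: "subspace A" and sB: "subspace B" using ch d(1) unfolding quot_chain_def codim_one_pair_def by auto
  have "c *\<^sub>R y \<in> B" using d(4) sB real_vector.subspace_scale by blast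
  moreover have "c *\<^sub>R y \<notin> A"
  proof
    assume "c *\<^sub>R y \<in> A"
    hence "(1/c) *\<^sub>R (c *\<^sub>R y) \<in> A" using sA real_vector.subspace_scale by blast
    thus False using d(4) \<open>0 < c\<close> by simp
  qed
  moreover have e1: "c *\<^sub>R y = c *\<^sub>R a + (c * t) *\<^sub>R v" using d(7) by (simp add: algebra_simps)
  moreover have e2: "c *\<^sub>R a \<in> A" using sA d(5) real_vector.subspace_scale by blast
  have "c *\<^sub>R y \<in> ori A B" unfolding d(3)
    by (rule mem_half[of "c *\<^sub>R a" A "c * t"]) (use \<open>0 < c\<close> d(6) e1 e2 in auto)
  thus ?thesis using pos_intro2[OF d(1)] \<open>c *\<^sub>R y \<in> B\<close> \<open>c *\<^sub>R y \<notin> A\<close> by blast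
qed

lemma pos_add:
  assumes ch: "quot_chain W V' C" and o: "orientation C ori" and p: "chain_pos C ori y"
    and q: "chain_pos C ori z"
  shows "chain_pos C ori (y + z)"
proof -
  obtain A B v a t where d: "codim_one_pair C A B" "v \<in> B - A"
    "ori A B = {a + t *\<^sub>R v | a t. a \<in> A \<and> 0 < t}" "y \<in> B - A" "a \<in> A" "0 < t" "y = a + t *\<^sub>R v"
    by (rule pos_decomp[OF o p])
  obtain A' B' v' a' t' where e: "codim_one_pair C A' B'" "v' \<in> B' - A'"
    "ori A' B' = {a + t *\<^sub>R v' | a t. a \<in> A' \<and> 0 < t}" "z \<in> B' - A'" "a' \<in> A'" "0 < t'" "z = a' + t' *\<^sub>R v'"
    by (rule pos_decomp[OF o q])
  have sA: "subspace A" and sB: "subspace B" using ch d(1) unfolding quot_chain_def codim_one_pair_def by auto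
  have sA': "subspace A'" and sB': "subspace B'" using ch e(1) unfolding quot_chain_def codim_one_pair_def by auto
  consider "A = A' \<and> B = B'" | "B \<subseteq> A'" | "B' \<subseteq> A" using pair_cmp[OF ch d(1) e(1)] by blast
  thus ?thesis
  proof cases
    case 1
    have "z \<in> ori A' B'" unfolding e(3) using e(5,6,7) by (rule mem_half)
    hence "z \<in> ori A B" using 1 by simp
    hence "z \<in> {a + t *\<^sub>R v | a t. a \<in> A \<and> 0 < t}" using d(3) by simp
    then obtain a'' s where f: "a'' \<in> A" "0 < s" "z = a'' + s *\<^sub>R v" by blast
    have aa: "a + a'' \<in> A" using sA d(5) f(1) real_vector.subspace_add by blast
    have eq: "y + z = (a + a'') + (t + s) *\<^sub>R v" using d(7) f(3) by (simp add: algebra_simps)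
    have "y + z \<in> B" using d(4) e(4) 1 sB real_vector.subspace_add by blast
    moreover have "y + z \<notin> A"
    proof
      assume "y + z \<in> A"
      hence "(y + z) - (a + a'') \<in> A" using sA d(5) f(1) by (meson real_vector.subspace_add real_vector.subspace_diff)
      hence "(t + s) *\<^sub>R v \<in> A" using eq by simp
      hence "(1/(t+s)) *\<^sub>R ((t + s) *\<^sub>R v) \<in> A" using sA real_vector.subspace_scale by blast
      thus False using d(2,6) f(2) by simp
    qed
    moreover have "y + z \<in> ori A B" unfolding d(3)
      by (rule mem_half[of "a + a''" A "t + s"]) (use aa d(6) f(2) eq in auto)
    ultimately show ?thesis using pos_intro2[OF d(1)] by blast
  next
    case 2
    have "y \<in> A'" using 2 d(4) by blast
    have g1: "y + z = (y + a') + t' *\<^sub>R v'" using e(7) by simp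
    have g2: "y + a' \<in> A'" using \<open>y \<in> A'\<close> e(5) sA' real_vector.subspace_add by blast
    have "y + z \<in> B'"
    proof -
      have "A' \<subseteq> B'" using e(1) unfolding codim_one_pair_def codim_one_def by simp
      thus ?thesis using e(4) \<open>y \<in> A'\<close> sB' real_vector.subspace_add by blast
    qed
    moreover have "y + z \<notin> A'"
    proof
      assume "y + z \<in> A'"
      hence "(y + z) - y \<in> A'" using \<open>y \<in> A'\<close> sA' real_vector.subspace_diff by blast
      thus False using e(4) by simp
    qed
    moreover have "y + z \<in> ori A' B'" unfolding e(3)
      by (rule mem_half[of "y + a'" A' t']) (use g1 g2 e(6) in auto)
    ultimately show ?thesis using pos_intro2[OF e(1)] by blast
  next
    case 3
    have "z \<in> A" using 3 e(4) by blast
    have g1: "y + z = (a + z) + t *\<^sub>R v" using d(7) by simp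
    have g2: "a + z \<in> A" using \<open>z \<in> A\<close> d(5) sA real_vector.subspace_add by blast
    have "y + z \<in> B"
    proof -
      have "A \<subseteq> B" using d(1) unfolding codim_one_pair_def codim_one_def by simp
      thus ?thesis using d(4) \<open>z \<in> A\<close> sB real_vector.subspace_add by blast
    qed
    moreover have "y + z \<notin> A"
    proof
      assume "y + z \<in> A"
      hence "(y + z) - z \<in> A" using \<open>z \<in> A\<close> sA real_vector.subspace_diff by blast
      thus False using d(4) by simp
    qed
    moreover have "y + z \<in> ori A B" unfolding d(3)
      by (rule mem_half[of "a + z" A t]) (use g1 g2 d(6) in auto)
    ultimately show ?thesis using pos_intro2[OF d(1)] by blast
  qed
qed


lemma pos_antisym:
  assumes ch: "quot_chain W V' C" and o: "orientation C ori" and p: "chain_pos C ori y"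
    and q: "chain_pos C ori (- y)"
  shows False
proof -
  obtain A B v a t where d: "codim_one_pair C A B" "v \<in> B - A"
    "ori A B = {a + t *\<^sub>R v | a t. a \<in> A \<and> 0 < t}" "y \<in> B - A" "a \<in> A" "0 < t" "y = a + t *\<^sub>R v"
    by (rule pos_decomp[OF o p])
  obtain A' B' v' a' t' where e: "codim_one_pair C A' B'" "v' \<in> B' - A'"
    "ori A' B' = {a + t *\<^sub>R v' | a t. a \<in> A' \<and> 0 < t}" "- y \<in> B' - A'" "a' \<in> A'" "0 < t'" "- y = a' + t' *\<^sub>R v'"
    by (rule pos_decomp[OF o q])
  have sA: "subspace A" using ch d(1) unfolding quot_chain_def codim_one_pair_def by auto
  have sA': "subspace A'" using ch e(1) unfolding quot_chain_def codim_one_pair_def by auto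
  consider "A = A' \<and> B = B'" | "B \<subseteq> A'" | "B' \<subseteq> A" using pair_cmp[OF ch d(1) e(1)] by blast
  thus False
  proof cases
    case 1
    have "- y \<in> ori A' B'" unfolding e(3) using e(5,6,7) by (rule mem_half)
    hence "- y \<in> ori A B" using 1 by simp
    hence "- y \<in> {a + t *\<^sub>R v | a t. a \<in> A \<and> 0 < t}" using d(3) by simp
    then obtain a'' s where f: "a'' \<in> A" "0 < s" "- y = a'' + s *\<^sub>R v" by blast
    have h1: "t *\<^sub>R v = y - a" using d(7) by simp
    have h2: "s *\<^sub>R v = - y - a''" using f(3) by (simp add: algebra_simps)
    have "(t + s) *\<^sub>R v = t *\<^sub>R v + s *\<^sub>R v" by (simp add: scaleR_add_left)
    also have "\<dots> = - (a + a'')" unfolding h1 h2 by (simp add: algebra_simps)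
    finally have "(t + s) *\<^sub>R v = - (a + a'')" .
    moreover have "- (a + a'') \<in> A" using sA d(5) f(1) by (meson real_vector.subspace_add real_vector.subspace_neg)
    ultimately have "(t + s) *\<^sub>R v \<in> A" by simp
    hence "(1/(t+s)) *\<^sub>R ((t + s) *\<^sub>R v) \<in> A" using sA real_vector.subspace_scale by blast
    thus False using d(2,6) f(2) by simp
  next
    case 2
    hence "y \<in> A'" using d(4) by blast
    hence "- y \<in> A'" using sA' real_vector.subspace_neg by blast
    thus False using e(4) by blast
  next
    case 3
    hence "- y \<in> A" using e(4) by blast
    hence "- (- y) \<in> A" using sA real_vector.subspace_neg by blast
    thus False using d(4) by simp
  qed
qed

lemma max_insert:
  assumes m: "quot_max_chain W V' C" and sU: "subspace U" and VU: "V' \<subseteq> U" and UW: "U \<subseteq> W"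
    and cmp: "\<And>G. G \<in> C \<Longrightarrow> G \<subseteq> U \<or> U \<subseteq> G"
  shows "U \<in> C"
proof (rule ccontr)
  assume nU: "U \<notin> C"
  have ch: "quot_chain W V' C" using m unfolding quot_max_chain_def by simp
  have sub: "\<And>G. G \<in> C \<Longrightarrow> subspace G \<and> V' \<subseteq> G \<and> G \<subseteq> W"
    and cmp2: "\<And>G H. G \<in> C \<Longrightarrow> H \<in> C \<Longrightarrow> G \<subseteq> H \<or> H \<subseteq> G"
    using ch unfolding quot_chain_def by auto
  have a1: "\<forall>G\<in>insert U C. subspace G \<and> V' \<subseteq> G \<and> G \<subseteq> W"
  proof
    fix G assume "G \<in> insert U C"
    hence "G = U \<or> G \<in> C" by simp
    thus "subspace G \<and> V' \<subseteq> G \<and> G \<subseteq> W" using sub sU VU UW by metis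
  qed
  have a2: "\<forall>G\<in>insert U C. \<forall>H\<in>insert U C. G \<subseteq> H \<or> H \<subseteq> G"
  proof (intro ballI)
    fix G H assume "G \<in> insert U C" "H \<in> insert U C"
    hence "G = U \<or> G \<in> C" "H = U \<or> H \<in> C" by simp_all
    thus "G \<subseteq> H \<or> H \<subseteq> G" using cmp cmp2 order_refl by metis
  qed
  have "quot_chain W V' (insert U C)" unfolding quot_chain_def using a1 a2 by (rule conjI)
  moreover have "C \<subset> insert U C" using nU by (simp add: psubset_insert_iff)
  ultimately show False using m unfolding quot_max_chain_def by metis
qed

lemma line_subspace:
  assumes "subspace A" shows "subspace {a + t *\<^sub>R y | a t. a \<in> A}"
  unfolding real_vector.subspace_def
proof (intro conjI ballI allI)
  show "0 \<in> {a + t *\<^sub>R y | a t. a \<in> A}"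
    using assms real_vector.subspace_0 by (intro CollectI exI[of _ 0] exI[of _ "0::real"]) auto
next
  fix x z assume "x \<in> {a + t *\<^sub>R y | a t. a \<in> A}" "z \<in> {a + t *\<^sub>R y | a t. a \<in> A}"
  then obtain a1 t1 a2 t2 where "x = a1 + t1 *\<^sub>R y" "a1 \<in> A" "z = a2 + t2 *\<^sub>R y" "a2 \<in> A" by blast
  moreover have "a1 + a2 \<in> A" using calculation assms real_vector.subspace_add by blast
  moreover have "x + z = (a1 + a2) + (t1 + t2) *\<^sub>R y" using calculation by (simp add: algebra_simps)
  ultimately show "x + z \<in> {a + t *\<^sub>R y | a t. a \<in> A}" by blast
next
  fix c and x assume "x \<in> {a + t *\<^sub>R y | a t. a \<in> A}"
  then obtain a1 t1 where "x = a1 + t1 *\<^sub>R y" "a1 \<in> A" by blast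
  moreover have "c *\<^sub>R a1 \<in> A" using calculation assms real_vector.subspace_scale by blast
  moreover have "c *\<^sub>R x = c *\<^sub>R a1 + (c * t1) *\<^sub>R y" using calculation by (simp add: algebra_simps)
  ultimately show "c *\<^sub>R x \<in> {a + t *\<^sub>R y | a t. a \<in> A}" by blast
qed

lemma pos_exists:
  assumes m: "quot_max_chain W V' C" and o: "orientation C ori"
    and sV: "subspace V'" and sW: "subspace W" and VW: "V' \<subseteq> W" and y: "y \<in> W" "y \<notin> V'"
  shows "chain_pos C ori y \<or> chain_pos C ori (- y)"
proof -
  have ch: "quot_chain W V' C" using m unfolding quot_max_chain_def by simp
  have sub: "\<And>G. G \<in> C \<Longrightarrow> subspace G \<and> V' \<subseteq> G \<and> G \<subseteq> W"
    and cmp: "\<And>G H. G \<in> C \<Longrightarrow> H \<in> C \<Longrightarrow> G \<subseteq> H \<or> H \<subseteq> G"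
    using ch unfolding quot_chain_def by auto
  have V'C: "V' \<in> C" using max_insert[OF m sV order.refl VW] sub by blast
  define Lo where "Lo = {G \<in> C. y \<notin> G}"
  define A where "A = \<Union>Lo"
  have V'Lo: "V' \<in> Lo" using V'C y unfolding Lo_def by blast
  have Ahi: "A \<subseteq> G" if "G \<in> C" "y \<in> G" for G
  proof
    fix x assume "x \<in> A"
    then obtain G' where "G' \<in> Lo" "x \<in> G'" unfolding A_def by blast
    hence "G' \<subseteq> G" using cmp[OF that(1), of G'] that(2) unfolding Lo_def by blast
    thus "x \<in> G" using \<open>x \<in> G'\<close> by blast
  qed
  have yA: "y \<notin> A" unfolding A_def Lo_def by blast
  have VA: "V' \<subseteq> A" using V'Lo unfolding A_def by blast
  have AW: "A \<subseteq> W" using sub unfolding A_def Lo_def by blast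
  have sA: "subspace A"
    unfolding real_vector.subspace_def
  proof (intro conjI ballI allI)
    show "0 \<in> A" using VA sV real_vector.subspace_0 by blast
  next
    fix x z assume "x \<in> A" "z \<in> A"
    then obtain G1 G2 where g: "G1 \<in> Lo" "x \<in> G1" "G2 \<in> Lo" "z \<in> G2" unfolding A_def by blast
    have "G1 \<subseteq> G2 \<or> G2 \<subseteq> G1" using cmp g unfolding Lo_def by blast
    moreover have "subspace G1" "subspace G2" using sub g unfolding Lo_def by auto
    ultimately have "x + z \<in> G1 \<or> x + z \<in> G2" using g real_vector.subspace_add by (metis subsetD)
    thus "x + z \<in> A" using g unfolding A_def by blast
  next
    fix c x assume "x \<in> A"
    then obtain G1 where g: "G1 \<in> Lo" "x \<in> G1" unfolding A_def by blast
    have "subspace G1" using sub g unfolding Lo_def by auto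
    hence "c *\<^sub>R x \<in> G1" using g real_vector.subspace_scale by blast
    thus "c *\<^sub>R x \<in> A" using g unfolding A_def by blast
  qed
  have AC: "A \<in> C"
  proof (rule max_insert[OF m sA VA AW])
    fix G assume "G \<in> C"
    show "G \<subseteq> A \<or> A \<subseteq> G"
    proof (cases "y \<in> G")
      case True thus ?thesis using Ahi \<open>G \<in> C\<close> by blast
    next
      case False thus ?thesis using \<open>G \<in> C\<close> unfolding A_def Lo_def by blast
    qed
  qed
  define B where "B = {a + t *\<^sub>R y | a t. a \<in> A}"
  have sB: "subspace B" unfolding B_def by (rule line_subspace[OF sA])
  have AB: "A \<subseteq> B"
  proof
    fix x assume "x \<in> A" thus "x \<in> B" unfolding B_def by (intro CollectI exI[of _ x] exI[of _ "0::real"]) auto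
  qed
  have yB: "y \<in> B" unfolding B_def using sA real_vector.subspace_0
    by (intro CollectI exI[of _ 0] exI[of _ "1::real"]) auto
  have BW: "B \<subseteq> W"
  proof
    fix x assume "x \<in> B"
    then obtain a t where "x = a + t *\<^sub>R y" "a \<in> A" unfolding B_def by blast
    thus "x \<in> W" using AW y(1) sW by (metis real_vector.subspace_add real_vector.subspace_scale subsetD)
  qed
  have BC: "B \<in> C"
  proof (rule max_insert[OF m sB _ BW])
    show "V' \<subseteq> B" using VA AB by blast
  next
    fix G assume "G \<in> C"
    show "G \<subseteq> B \<or> B \<subseteq> G"
    proof (cases "y \<in> G")
      case True
      have "B \<subseteq> G"
      proof
        fix x assume "x \<in> B"
        then obtain a t where "x = a + t *\<^sub>R y" "a \<in> A" unfolding B_def by blast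
        moreover have "a \<in> G" using Ahi[OF \<open>G \<in> C\<close> True] \<open>a \<in> A\<close> by blast
        moreover have "subspace G" using sub \<open>G \<in> C\<close> by blast
        ultimately show "x \<in> G" using True by (metis real_vector.subspace_add real_vector.subspace_scale)
      qed
      thus ?thesis by blast
    next
      case False thus ?thesis using \<open>G \<in> C\<close> AB unfolding A_def Lo_def by blast
    qed
  qed
  have cod: "codim_one A B" unfolding codim_one_def
  proof (intro conjI exI[of _ y])
    show "A \<subseteq> B" by (rule AB)
    show "y \<notin> A" by (rule yA)
    show "B = {a + t *\<^sub>R y | a t. a \<in> A}" by (rule B_def)
  qed
  have pair: "codim_one_pair C A B" unfolding codim_one_pair_def using AC BC cod by blast
  obtain v where v: "v \<in> B - A" "ori A B = {a + t *\<^sub>R v | a t. a \<in> A \<and> 0 < t}"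
    using o pair unfolding orientation_def half_space_def by blast
  obtain a0 s where as: "v = a0 + s *\<^sub>R y" "a0 \<in> A" using v(1) unfolding B_def by blast
  have "s \<noteq> 0" using as v(1) by auto
  have ya: "y = (- (1/s)) *\<^sub>R a0 + (1/s) *\<^sub>R v" using as \<open>s \<noteq> 0\<close> by (simp add: algebra_simps)
  have nya: "- y = (1/s) *\<^sub>R a0 + (- (1/s)) *\<^sub>R v" using as \<open>s \<noteq> 0\<close> by (simp add: algebra_simps)
  have a1: "(- (1/s)) *\<^sub>R a0 \<in> A" "(1/s) *\<^sub>R a0 \<in> A" using as(2) sA real_vector.subspace_scale by blast+
  have nyB: "- y \<in> B - A" using yB yA sB sA real_vector.subspace_neg
    by (metis DiffI minus_minus)
  show ?thesis
  proof (cases "s > 0")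
    case True
    have "y \<in> ori A B" unfolding v(2) by (rule mem_half[OF a1(1) _ ya]) (use True in simp)
    thus ?thesis using pos_intro2[OF pair] yB yA by blast
  next
    case False
    hence "s < 0" using \<open>s \<noteq> 0\<close> by simp
    have "- y \<in> ori A B" unfolding v(2) by (rule mem_half[OF a1(2) _ nya]) (use \<open>s < 0\<close> in simp)
    thus ?thesis using pos_intro2[OF pair] nyB by blast
  qed
qed

lemma comb_pos:
  assumes ch: "quot_chain W V' C" and o: "orientation C ori"
    and P: "\<And>x. x \<in> P \<Longrightarrow> chain_pos C ori x" and k: "k \<in> nonneg_comb P"
  shows "k = 0 \<or> chain_pos C ori k"
proof -
  obtain F c where F: "finite F" "F \<subseteq> P" "\<forall>x\<in>F. 0 \<le> c x" "k = (\<Sum>x\<in>F. c x *\<^sub>R x)"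
    using k unfolding nonneg_comb_def by blast
  have "F \<subseteq> P \<longrightarrow> (\<forall>x\<in>F. 0 \<le> c x) \<longrightarrow> (\<Sum>x\<in>F. c x *\<^sub>R x) = 0 \<or> chain_pos C ori (\<Sum>x\<in>F. c x *\<^sub>R x)"
    using F(1)
  proof (induction F rule: finite_induct)
    case empty thus ?case by simp
  next
    case (insert x F)
    show ?case
    proof (intro impI)
      assume h: "insert x F \<subseteq> P" "\<forall>z\<in>insert x F. 0 \<le> c z"
      have r: "(\<Sum>x\<in>F. c x *\<^sub>R x) = 0 \<or> chain_pos C ori (\<Sum>x\<in>F. c x *\<^sub>R x)" using insert h by blast
      have px: "chain_pos C ori x" using P h by blast
      have hx: "c x *\<^sub>R x = 0 \<or> chain_pos C ori (c x *\<^sub>R x)"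
      proof (cases "c x = 0")
        case False hence "c x > 0" using h by force
        thus ?thesis using pos_scale[OF ch o px] by blast
      qed simp
      have eq: "(\<Sum>z\<in>insert x F. c z *\<^sub>R z) = c x *\<^sub>R x + (\<Sum>z\<in>F. c z *\<^sub>R z)"
        using insert by simp
      show "(\<Sum>z\<in>insert x F. c z *\<^sub>R z) = 0 \<or> chain_pos C ori (\<Sum>z\<in>insert x F. c z *\<^sub>R z)"
        unfolding eq using r hx pos_add[OF ch o] by fastforce
    qed
  qed
  thus ?thesis using F by blast
qed


lemma part2:
  fixes \<Delta> :: "'v::real_vector set"
  assumes sV: "subspace V'" and VW: "V' \<subseteq> span \<Delta>" and om: "oriented_max_chain (span \<Delta>) V' C ori"
  shows "parabolic \<Delta> (assoc_minus \<Delta> V' C ori) (\<Delta> \<inter> V') (assoc_plus \<Delta> V' C ori)"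
proof -
  define Dm where "Dm = assoc_minus \<Delta> V' C ori"
  define Dp where "Dp = assoc_plus \<Delta> V' C ori"
  define D0 where "D0 = \<Delta> \<inter> V'"
  have m: "quot_max_chain (span \<Delta>) V' C" and o: "orientation C ori"
    using om unfolding oriented_max_chain_def by auto
  have ch: "quot_chain (span \<Delta>) V' C" using m unfolding quot_max_chain_def by simp
  have Dm: "\<And>x. x \<in> Dm \<longleftrightarrow> x \<in> \<Delta> \<and> x \<notin> V' \<and> chain_pos C ori (- x)"
    unfolding Dm_def assoc_minus_def by simp
  have Dp: "\<And>x. x \<in> Dp \<longleftrightarrow> x \<in> \<Delta> \<and> x \<notin> V' \<and> chain_pos C ori x"
    unfolding Dp_def assoc_plus_def by simp
  have spD0: "span D0 \<subseteq> V'" unfolding D0_def using sV real_vector.span_minimal by blast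
  have cover: "\<Delta> = Dm \<union> D0 \<union> Dp"
  proof
    show "\<Delta> \<subseteq> Dm \<union> D0 \<union> Dp"
    proof
      fix x assume x: "x \<in> \<Delta>"
      show "x \<in> Dm \<union> D0 \<union> Dp"
      proof (cases "x \<in> V'")
        case True thus ?thesis using x unfolding D0_def by blast
      next
        case False
        have "x \<in> span \<Delta>" using x real_vector.span_superset by blast
        hence "chain_pos C ori x \<or> chain_pos C ori (- x)"
          using pos_exists[OF m o sV real_vector.subspace_span VW] False by blast
        thus ?thesis using Dm Dp x False by blast
      qed
    qed
    show "Dm \<union> D0 \<union> Dp \<subseteq> \<Delta>" using Dm Dp unfolding D0_def by blast
  qed
  have nocone: "\<not> (\<exists>S. subspace S \<and> span D0 \<subset> S \<and>
            S \<subseteq> {k + w | k w. k \<in> nonneg_comb (Dp \<union> uminus ` Dm) \<and> w \<in> span D0})"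
  proof
    assume "\<exists>S. subspace S \<and> span D0 \<subset> S \<and>
            S \<subseteq> {k + w | k w. k \<in> nonneg_comb (Dp \<union> uminus ` Dm) \<and> w \<in> span D0}"
    then obtain S where S: "subspace S" "span D0 \<subset> S"
      "S \<subseteq> {k + w | k w. k \<in> nonneg_comb (Dp \<union> uminus ` Dm) \<and> w \<in> span D0}" by blast
    obtain x where x: "x \<in> S" "x \<notin> span D0" using S(2) by blast
    have "- x \<in> S" using S(1) x(1) real_vector.subspace_neg by blast
    then obtain k' w' where kw': "k' \<in> nonneg_comb (Dp \<union> uminus ` Dm)" "w' \<in> span D0" "- x = k' + w'"
      using S(3) by blast
    obtain k w where kw: "k \<in> nonneg_comb (Dp \<union> uminus ` Dm)" "w \<in> span D0" "x = k + w"
      using S(3) x(1) by blast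
    have P: "\<And>z. z \<in> Dp \<union> uminus ` Dm \<Longrightarrow> chain_pos C ori z" using Dm Dp by auto
    have k: "k = 0 \<or> chain_pos C ori k" by (rule comb_pos[OF ch o P kw(1)])
    have k': "k' = 0 \<or> chain_pos C ori k'" by (rule comb_pos[OF ch o P kw'(1)])
    have "k + k' = - (w + w')" using kw(3) kw'(3) by (metis add.inverse_inverse add_eq_0_iff2 add.assoc add.commute minus_add_distrib)
    moreover have "- (w + w') \<in> V'" using kw(2) kw'(2) spD0 sV
      by (meson real_vector.subspace_add real_vector.subspace_neg subsetD)
    ultimately have kk: "k + k' \<in> V'" by simp
    show False
    proof (cases "k = 0")
      case True thus False using kw x by (simp add: real_vector.span_add)
    next
      case False
      hence pk: "chain_pos C ori k" using k by simp
      show False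
      proof (cases "k' = 0")
        case True thus False using kk pk pos_notin[OF ch o] by simp
      next
        case False
        hence "chain_pos C ori k'" using k' by simp
        hence "chain_pos C ori (k + k')" using pos_add[OF ch o pk] by blast
        thus False using kk pos_notin[OF ch o] by blast
      qed
    qed
  qed
  have "parabolic \<Delta> Dm D0 Dp"
    unfolding parabolic_def
  proof (intro conjI)
    show "\<Delta> = Dm \<union> D0 \<union> Dp" by (rule cover)
    show "Dm \<inter> D0 = {}" using Dm unfolding D0_def by blast
    show "D0 \<inter> Dp = {}" using Dp unfolding D0_def by blast
    show "Dm \<inter> Dp = {}" using Dm Dp pos_antisym[OF ch o] by (metis disjoint_iff minus_minus)
    show "\<forall>a\<in>Dm. \<forall>b\<in>Dp. a - b \<notin> span D0"
    proof (intro ballI)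
      fix a b assume "a \<in> Dm" "b \<in> Dp"
      hence "chain_pos C ori (b + - a)" using Dm Dp pos_add[OF ch o] by blast
      hence "b + - a \<notin> V'" using pos_notin[OF ch o] by blast
      hence "a - b \<notin> V'" using sV real_vector.subspace_neg by (metis add.commute minus_diff_eq uminus_add_conv_diff)
      thus "a - b \<notin> span D0" using spD0 by blast
    qed
    show "\<forall>a\<in>Dm. a \<notin> span D0" using Dm spD0 by blast
    show "\<forall>b\<in>Dp. b \<notin> span D0" using Dp spD0 by blast
    show "\<not> (\<exists>S. subspace S \<and> span D0 \<subset> S \<and>
            S \<subseteq> {k + w | k w. k \<in> nonneg_comb (Dp \<union> uminus ` Dm) \<and> w \<in> span D0})" by (rule nocone)
  qed
  thus ?thesis unfolding Dm_def Dp_def D0_def .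
qed




lemma ncI: "finite F \<Longrightarrow> F \<subseteq> S \<Longrightarrow> \<forall>x\<in>F. 0 \<le> c x \<Longrightarrow> y = (\<Sum>x\<in>F. c x *\<^sub>R x) \<Longrightarrow> y \<in> nonneg_comb S"
  unfolding nonneg_comb_def by blast

lemma ncE:
  assumes "y \<in> nonneg_comb S"
  obtains F c where "finite F" "F \<subseteq> S" "\<forall>x\<in>F. 0 \<le> c x" "y = (\<Sum>x\<in>F. c x *\<^sub>R x)"
  using assms unfolding nonneg_comb_def by blast

lemma nc_0: "0 \<in> nonneg_comb S"
  unfolding nonneg_comb_def by (intro CollectI exI[of _ "{}"]) auto

lemma nc_elem: "x \<in> S \<Longrightarrow> x \<in> nonneg_comb S"
  unfolding nonneg_comb_def by (intro CollectI exI[of _ "{x}"] exI[of _ "\<lambda>_. 1"]) auto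

lemma nc_scale:
  assumes "x \<in> nonneg_comb S" "0 \<le> t" shows "t *\<^sub>R x \<in> nonneg_comb S"
proof -
  obtain F c where F: "finite F" "F \<subseteq> S" "\<forall>x\<in>F. 0 \<le> c x" "x = (\<Sum>x\<in>F. c x *\<^sub>R x)"
    using assms(1) by (rule ncE)
  have "t *\<^sub>R x = (\<Sum>x\<in>F. (t * c x) *\<^sub>R x)" using F(4) by (simp add: scaleR_sum_right)
  moreover have "\<forall>x\<in>F. 0 \<le> t * c x" using F(3) assms(2) by simp
  ultimately show ?thesis using F(1,2) by (intro ncI[of F S "\<lambda>x. t * c x"]) auto
qed

lemma nc_add:
  assumes "x \<in> nonneg_comb S" "y \<in> nonneg_comb S" shows "x + y \<in> nonneg_comb S"
proof -
  obtain F1 c1 where F1: "finite F1" "F1 \<subseteq> S" "\<forall>x\<in>F1. 0 \<le> c1 x" "x = (\<Sum>x\<in>F1. c1 x *\<^sub>R x)"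
    using assms(1) by (rule ncE)
  obtain F2 c2 where F2: "finite F2" "F2 \<subseteq> S" "\<forall>x\<in>F2. 0 \<le> c2 x" "y = (\<Sum>x\<in>F2. c2 x *\<^sub>R x)"
    using assms(2) by (rule ncE)
  define c where "c = (\<lambda>z. (if z \<in> F1 then c1 z else 0) + (if z \<in> F2 then c2 z else 0))"
  have "(\<Sum>z\<in>F1 \<union> F2. c z *\<^sub>R z) = (\<Sum>z\<in>F1 \<union> F2. (if z \<in> F1 then c1 z else 0) *\<^sub>R z) + (\<Sum>z\<in>F1 \<union> F2. (if z \<in> F2 then c2 z else 0) *\<^sub>R z)"
    unfolding c_def by (simp add: scaleR_add_left sum.distrib)
  also have "(\<Sum>z\<in>F1 \<union> F2. (if z \<in> F1 then c1 z else 0) *\<^sub>R z) = (\<Sum>z\<in>F1. c1 z *\<^sub>R z)"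
    by (rule sum.mono_neutral_cong_right) (use F1(1) F2(1) in auto)
  also have "(\<Sum>z\<in>F1 \<union> F2. (if z \<in> F2 then c2 z else 0) *\<^sub>R z) = (\<Sum>z\<in>F2. c2 z *\<^sub>R z)"
    by (rule sum.mono_neutral_cong_right) (use F1(1) F2(1) in auto)
  finally have "x + y = (\<Sum>z\<in>F1 \<union> F2. c z *\<^sub>R z)" using F1(4) F2(4) by simp
  moreover have "\<forall>z\<in>F1 \<union> F2. 0 \<le> c z" unfolding c_def using F1(3) F2(3) by auto
  moreover have "finite (F1 \<union> F2)" "F1 \<union> F2 \<subseteq> S" using F1 F2 by auto
  ultimately show ?thesis by (intro ncI[of "F1 \<union> F2" S c]) auto
qed

lemma nc_span: "nonneg_comb S \<subseteq> span S"
proof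
  fix x assume "x \<in> nonneg_comb S"
  then obtain F c where F: "finite F" "F \<subseteq> S" "x = (\<Sum>x\<in>F. c x *\<^sub>R x)"
    by (rule ncE)
  have "\<And>z. z \<in> F \<Longrightarrow> c z *\<^sub>R z \<in> span S"
    using F(2) by (meson real_vector.span_scale real_vector.span_superset subsetD)
  thus "x \<in> span S" unfolding F(3) by (rule real_vector.span_sum)
qed


locale ordc =
  fixes Z W K :: "'v::real_vector set"
  assumes sZ: "subspace Z" and sW: "subspace W" and ZK: "Z \<subseteq> K" and KW: "K \<subseteq> W"
    and Kadd: "\<And>x y. x \<in> K \<Longrightarrow> y \<in> K \<Longrightarrow> x + y \<in> K"
    and Kscale: "\<And>x t. x \<in> K \<Longrightarrow> 0 \<le> t \<Longrightarrow> t *\<^sub>R x \<in> K"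
    and Kpt: "\<And>x. x \<in> K \<Longrightarrow> - x \<in> K \<Longrightarrow> x \<in> Z"
    and Ktot: "\<And>x. x \<in> W \<Longrightarrow> x \<in> K \<or> - x \<in> K"
begin

definition cvx where
  "cvx G \<longleftrightarrow> subspace G \<and> Z \<subseteq> G \<and> G \<subseteq> W \<and> (\<forall>x b. x \<in> K \<longrightarrow> b - x \<in> K \<longrightarrow> b \<in> G \<longrightarrow> x \<in> G)"

definition T where "T y = {z \<in> W. \<forall>t>0. y - t *\<^sub>R z \<in> K \<and> y + t *\<^sub>R z \<in> K}"

definition ori where
  "ori A B = {a + t *\<^sub>R (SOME v. v \<in> B - A \<and> v \<in> K) | a t. a \<in> A \<and> 0 < t}"

lemma cvxD:
  assumes "cvx G"
  shows "subspace G" "Z \<subseteq> G" "G \<subseteq> W" "\<And>x b. x \<in> K \<Longrightarrow> b - x \<in> K \<Longrightarrow> b \<in> G \<Longrightarrow> x \<in> G"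
  using assms unfolding cvx_def by blast+

lemma K0: "0 \<in> K" using ZK sZ real_vector.subspace_0 by blast

lemma KinW: "x \<in> K \<Longrightarrow> x \<in> W" using KW by blast

lemma TI:
  assumes "z \<in> W" "\<And>t. 0 < t \<Longrightarrow> y - t *\<^sub>R z \<in> K" "\<And>t. 0 < t \<Longrightarrow> y + t *\<^sub>R z \<in> K"
  shows "z \<in> T y"
  using assms unfolding T_def by blast

lemma TD:
  assumes "z \<in> T y" "0 < t"
  shows "z \<in> W" "y - t *\<^sub>R z \<in> K" "y + t *\<^sub>R z \<in> K"
  using assms unfolding T_def by blast+

lemma half_aux: "(1/2) *\<^sub>R y + (1/2) *\<^sub>R (y::'v) = y"
  by (simp flip: scaleR_add_left)

lemma half_eq: "(1/2) *\<^sub>R (y - (2*t) *\<^sub>R a) + (1/2) *\<^sub>R (y - (2*t) *\<^sub>R b) = y - t *\<^sub>R (a + (b::'v))"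
proof -
  have "(1/2) *\<^sub>R (y - (2*t) *\<^sub>R a) = (1/2) *\<^sub>R y - t *\<^sub>R a" by (simp add: scaleR_right_diff_distrib)
  moreover have "(1/2) *\<^sub>R (y - (2*t) *\<^sub>R b) = (1/2) *\<^sub>R y - t *\<^sub>R b" by (simp add: scaleR_right_diff_distrib)
  ultimately show ?thesis using half_aux[of y] by (simp add: algebra_simps)
qed

lemma half_eq2: "(1/2) *\<^sub>R (y + (2*t) *\<^sub>R a) + (1/2) *\<^sub>R (y + (2*t) *\<^sub>R b) = y + t *\<^sub>R (a + (b::'v))"
proof -
  have "(1/2) *\<^sub>R (y + (2*t) *\<^sub>R a) = (1/2) *\<^sub>R y + t *\<^sub>R a" by (simp add: scaleR_add_right)
  moreover have "(1/2) *\<^sub>R (y + (2*t) *\<^sub>R b) = (1/2) *\<^sub>R y + t *\<^sub>R b" by (simp add: scaleR_add_right)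
  ultimately show ?thesis using half_aux[of y] by (simp add: algebra_simps)
qed

lemma T_cvx:
  assumes y: "y \<in> K" shows "cvx (T y)"
proof -
  have sub: "subspace (T y)"
    unfolding real_vector.subspace_def
  proof (intro conjI ballI allI)
    show "0 \<in> T y" using y sW real_vector.subspace_0 by (intro TI) auto
  next
    fix a b assume a: "a \<in> T y" and b: "b \<in> T y"
    show "a + b \<in> T y"
    proof (rule TI)
      show "a + b \<in> W" using TD(1)[OF a] TD(1)[OF b] sW real_vector.subspace_add zero_less_one by metis
    next
      fix t :: real assume "0 < t"
      hence t2: "0 < 2 * t" by simp
      have "(1/2) *\<^sub>R (y - (2*t) *\<^sub>R a) + (1/2) *\<^sub>R (y - (2*t) *\<^sub>R b) \<in> K"
        by (rule Kadd[OF Kscale[OF TD(2)[OF a t2]] Kscale[OF TD(2)[OF b t2]]]) auto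
      thus "y - t *\<^sub>R (a + b) \<in> K" by (simp only: half_eq)
      have "(1/2) *\<^sub>R (y + (2*t) *\<^sub>R a) + (1/2) *\<^sub>R (y + (2*t) *\<^sub>R b) \<in> K"
        by (rule Kadd[OF Kscale[OF TD(3)[OF a t2]] Kscale[OF TD(3)[OF b t2]]]) auto
      thus "y + t *\<^sub>R (a + b) \<in> K" by (simp only: half_eq2)
    qed
  next
    fix c :: real and a assume a: "a \<in> T y"
    show "c *\<^sub>R a \<in> T y"
    proof (rule TI)
      show "c *\<^sub>R a \<in> W" using TD(1)[OF a zero_less_one] sW real_vector.subspace_scale by blast
    next
      fix t :: real assume t: "0 < t"
      consider "c > 0" | "c = 0" | "c < 0" by linarith
      hence "y - t *\<^sub>R c *\<^sub>R a \<in> K \<and> y + t *\<^sub>R c *\<^sub>R a \<in> K"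
      proof cases
        case 1
        hence "0 < t * c" using t by simp
        thus ?thesis using TD(2,3)[OF a] by simp
      next
        case 2 thus ?thesis using y by simp
      next
        case 3
        hence "0 < t * (- c)" using t by (simp add: mult_pos_neg)
        from TD(2,3)[OF a this] show ?thesis by (simp add: algebra_simps)
      qed
      thus "y - t *\<^sub>R c *\<^sub>R a \<in> K" "y + t *\<^sub>R c *\<^sub>R a \<in> K" by auto
    qed
  qed
  have ZT: "Z \<subseteq> T y"
  proof
    fix z assume z: "z \<in> Z"
    show "z \<in> T y"
    proof (rule TI)
      show "z \<in> W" using z ZK KW by blast
    next
      fix t :: real
      have z1: "t *\<^sub>R z \<in> Z" using real_vector.subspace_scale[OF sZ z] .
      have z2: "- (t *\<^sub>R z) \<in> Z" using real_vector.subspace_neg[OF sZ z1] .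
      have "y + - (t *\<^sub>R z) \<in> K" using Kadd[OF y subsetD[OF ZK z2]] .
      thus "y - t *\<^sub>R z \<in> K" by simp
      show "y + t *\<^sub>R z \<in> K" using Kadd[OF y subsetD[OF ZK z1]] .
    qed
  qed
  have TW: "T y \<subseteq> W" unfolding T_def by blast
  have conv: "\<And>x b. x \<in> K \<Longrightarrow> b - x \<in> K \<Longrightarrow> b \<in> T y \<Longrightarrow> x \<in> T y"
  proof -
    fix x b assume x: "x \<in> K" and bx: "b - x \<in> K" and b: "b \<in> T y"
    show "x \<in> T y"
    proof (rule TI)
      show "x \<in> W" using x KW by blast
    next
      fix t :: real assume t: "0 < t"
      have "(y - t *\<^sub>R b) + t *\<^sub>R (b - x) \<in> K" using TD(2)[OF b t] bx t by (intro Kadd Kscale) auto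
      thus "y - t *\<^sub>R x \<in> K" by (simp add: algebra_simps)
      show "y + t *\<^sub>R x \<in> K" using y x t by (intro Kadd Kscale) auto
    qed
  qed
  show ?thesis unfolding cvx_def
    by (intro conjI allI impI sub ZT TW; rule conv; assumption)
qed

lemma y_notin_T:
  assumes "y \<in> K" "y \<notin> Z" shows "y \<notin> T y"
proof
  assume "y \<in> T y"
  hence "y - 2 *\<^sub>R y \<in> K" using TD(2)[of y y 2] by simp
  hence "- y \<in> K" by (simp add: scaleR_2)
  thus False using Kpt assms by blast
qed


lemma Kneg_Z: "x \<in> K \<Longrightarrow> x \<notin> Z \<Longrightarrow> - x \<notin> K"
  using Kpt by blast

lemma dedekind:
  assumes y: "y \<in> K" "y \<notin> Z" and x: "x \<in> W" and r: "0 \<le> r"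
    and h1: "r *\<^sub>R y - x \<in> K" and h2: "r *\<^sub>R y + x \<in> K"
  shows "\<exists>c. x - c *\<^sub>R y \<in> T y"
proof -
  define L where "L = {s. x - s *\<^sub>R y \<in> K}"
  have yW: "y \<in> W" using y(1) KW by blast
  have mr: "- r \<in> L" unfolding L_def using h2 by (simp add: add.commute)
  have bnd: "s \<le> r" if "s \<in> L" for s
  proof (rule ccontr)
    assume "\<not> s \<le> r"
    hence sr: "0 < s - r" by simp
    have "(x - s *\<^sub>R y) + (r *\<^sub>R y - x) \<in> K" using that h1 unfolding L_def by (intro Kadd) auto
    hence rs: "(r - s) *\<^sub>R y \<in> K" by (simp add: algebra_simps)
    have "(1 / (s - r)) *\<^sub>R ((r - s) *\<^sub>R y) \<in> K" by (rule Kscale[OF rs]) (use sr in simp)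
    moreover have "(1 / (s - r)) *\<^sub>R ((r - s) *\<^sub>R y) = - y"
    proof -
      have "(1 / (s - r)) * (r - s) = -1" using sr by (simp add: field_simps)
      thus ?thesis by simp
    qed
    ultimately show False using Kneg_Z y by simp
  qed
  have ne: "L \<noteq> {}" using mr by blast
  have bdd: "bdd_above L" using bnd by (intro bdd_aboveI) auto
  define c where "c = Sup L"
  have "x - c *\<^sub>R y \<in> T y"
  proof (rule TI)
    show "x - c *\<^sub>R y \<in> W" using x yW sW by (meson real_vector.subspace_diff real_vector.subspace_scale)
  next
    fix t :: real assume t: "0 < t"
    have "c + 1/t \<notin> L"
    proof
      assume "c + 1/t \<in> L"
      hence "c + 1/t \<le> c" unfolding c_def using bdd by (rule cSup_upper)
      thus False using t by simp
    qed
    hence "x - (c + 1/t) *\<^sub>R y \<notin> K" unfolding L_def by simp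
    moreover have "x - (c + 1/t) *\<^sub>R y \<in> W" using x yW sW by (meson real_vector.subspace_diff real_vector.subspace_scale)
    ultimately have "- (x - (c + 1/t) *\<^sub>R y) \<in> K" using Ktot by blast
    hence "t *\<^sub>R (- (x - (c + 1/t) *\<^sub>R y)) \<in> K" using t by (intro Kscale) auto
    moreover have "t *\<^sub>R (- (x - (c + 1/t) *\<^sub>R y)) = y - t *\<^sub>R (x - c *\<^sub>R y)"
    proof -
      have e1: "t * (c + 1/t) = t * c + 1" using t by (simp add: field_simps)
      have "t *\<^sub>R ((c + 1/t) *\<^sub>R y) = (t * (c + 1/t)) *\<^sub>R y" by (rule scaleR_scaleR)
      also have "\<dots> = (t * c + 1) *\<^sub>R y" by (simp only: e1)
      also have "\<dots> = (t * c) *\<^sub>R y + y" by (simp add: scaleR_add_left)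
      finally have "t *\<^sub>R ((c + 1/t) *\<^sub>R y) = (t * c) *\<^sub>R y + y" .
      thus ?thesis by (simp add: algebra_simps)
    qed
    ultimately show "y - t *\<^sub>R (x - c *\<^sub>R y) \<in> K" by simp
    have "c - 1/t < Sup L" unfolding c_def[symmetric] using t by simp
    then obtain s where s: "s \<in> L" "c - 1/t < s" using less_cSup_iff[OF ne bdd] by blast
    have "(x - s *\<^sub>R y) + (s - (c - 1/t)) *\<^sub>R y \<in> K" using s y(1) unfolding L_def by (intro Kadd Kscale) auto
    hence "x - (c - 1/t) *\<^sub>R y \<in> K" by (simp add: algebra_simps)
    hence "t *\<^sub>R (x - (c - 1/t) *\<^sub>R y) \<in> K" using t by (intro Kscale) auto
    moreover have "t *\<^sub>R (x - (c - 1/t) *\<^sub>R y) = y + t *\<^sub>R (x - c *\<^sub>R y)"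
    proof -
      have e2: "t * (c - 1/t) = t * c - 1" using t by (simp add: field_simps)
      have "t *\<^sub>R ((c - 1/t) *\<^sub>R y) = (t * (c - 1/t)) *\<^sub>R y" by (rule scaleR_scaleR)
      also have "\<dots> = (t * c - 1) *\<^sub>R y" by (simp only: e2)
      also have "\<dots> = (t * c) *\<^sub>R y - y" by (simp add: scaleR_diff_left)
      finally have "t *\<^sub>R ((c - 1/t) *\<^sub>R y) = (t * c) *\<^sub>R y - y" .
      thus ?thesis by (simp add: algebra_simps)
    qed
    ultimately show "y + t *\<^sub>R (x - c *\<^sub>R y) \<in> K" by simp
  qed
  thus ?thesis by blast
qed


lemma cvx_pos_witness:
  assumes G: "cvx G" and H: "cvx H" and x: "x \<in> G" "x \<notin> H"
  shows "\<exists>x'. x' \<in> G \<and> x' \<notin> H \<and> x' \<in> K"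
proof -
  have xW: "x \<in> W" using x(1) cvxD(3)[OF G] by blast
  show ?thesis
  proof (cases "x \<in> K")
    case True thus ?thesis using x by blast
  next
    case False
    hence nk: "- x \<in> K" using Ktot[OF xW] by simp
    have "- x \<in> G" using real_vector.subspace_neg[OF cvxD(1)[OF G] x(1)] .
    moreover have "- x \<notin> H"
    proof
      assume "- x \<in> H"
      hence "- (- x) \<in> H" using real_vector.subspace_neg[OF cvxD(1)[OF H]] by blast
      thus False using x(2) by simp
    qed
    ultimately show ?thesis using nk by blast
  qed
qed

lemma cvx_cmp:
  assumes G: "cvx G" and H: "cvx H" shows "G \<subseteq> H \<or> H \<subseteq> G"
proof (rule ccontr)
  assume "\<not> (G \<subseteq> H \<or> H \<subseteq> G)"
  then obtain x z where "x \<in> G" "x \<notin> H" "z \<in> H" "z \<notin> G" by blast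
  then obtain x' z' where x': "x' \<in> G" "x' \<notin> H" "x' \<in> K" and z': "z' \<in> H" "z' \<notin> G" "z' \<in> K"
    using cvx_pos_witness[OF G H] cvx_pos_witness[OF H G] by metis
  have "z' - x' \<in> W"
    using cvxD(3)[OF G] cvxD(3)[OF H] x'(1) z'(1) sW real_vector.subspace_diff by blast
  hence "z' - x' \<in> K \<or> - (z' - x') \<in> K" using Ktot by blast
  thus False
  proof
    assume "z' - x' \<in> K"
    hence "x' \<in> H" using cvxD(4)[OF H x'(3) _ z'(1)] by blast
    thus False using x'(2) by blast
  next
    assume "- (z' - x') \<in> K"
    hence "x' - z' \<in> K" by simp
    hence "z' \<in> G" using cvxD(4)[OF G z'(3) _ x'(1)] by blast
    thus False using z'(2) by blast
  qed
qed

lemma cvx_max: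
  assumes sU: "subspace U" and ZU: "Z \<subseteq> U" and UW: "U \<subseteq> W"
    and cmp: "\<And>G. cvx G \<Longrightarrow> G \<subseteq> U \<or> U \<subseteq> G"
  shows "cvx U"
  unfolding cvx_def
proof (intro conjI allI impI sU ZU UW)
  fix x b assume x: "x \<in> K" and bx: "b - x \<in> K" and b: "b \<in> U"
  have bK: "b \<in> K" using Kadd[OF x bx] by simp
  show "x \<in> U"
  proof (cases "b \<in> Z")
    case True
    have "- b \<in> Z" using real_vector.subspace_neg[OF sZ True] .
    hence "(b - x) + - b \<in> K" using Kadd[OF bx] ZK by blast
    hence "- x \<in> K" by simp
    hence "x \<in> Z" using Kpt[OF x] by simp
    thus ?thesis using ZU by blast
  next
    case False
    have "T b \<subseteq> U \<or> U \<subseteq> T b" using cmp[OF T_cvx[OF bK]] .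
    moreover have "b \<notin> T b" using y_notin_T[OF bK False] .
    ultimately have TU: "T b \<subseteq> U" using b by blast
    have "1 *\<^sub>R b - x \<in> K" using bx by simp
    moreover have "1 *\<^sub>R b + x \<in> K" using Kadd[OF bK x] by simp
    moreover have "x \<in> W" using x KW by blast
    ultimately obtain c where c: "x - c *\<^sub>R b \<in> T b" using dedekind[OF bK False, of x 1] by auto
    have "x - c *\<^sub>R b \<in> U" using c TU by blast
    moreover have "c *\<^sub>R b \<in> U" using real_vector.subspace_scale[OF sU b] .
    ultimately have "(x - c *\<^sub>R b) + c *\<^sub>R b \<in> U" using real_vector.subspace_add[OF sU] by blast
    thus ?thesis by simp
  qed
qed

lemma qmc: "quot_max_chain W Z {G. cvx G}"
proof -
  have ch: "quot_chain W Z {G. cvx G}"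
    unfolding quot_chain_def
  proof (intro conjI ballI)
    fix G assume "G \<in> {G. cvx G}"
    hence G: "cvx G" by simp
    show "subspace G" "Z \<subseteq> G" "G \<subseteq> W" using cvxD[OF G] by auto
  next
    fix G H assume "G \<in> {G. cvx G}" "H \<in> {G. cvx G}"
    thus "G \<subseteq> H \<or> H \<subseteq> G" using cvx_cmp by simp
  qed
  have "\<not> (\<exists>C'. quot_chain W Z C' \<and> {G. cvx G} \<subset> C')"
  proof
    assume "\<exists>C'. quot_chain W Z C' \<and> {G. cvx G} \<subset> C'"
    then obtain C' where C': "quot_chain W Z C'" "{G. cvx G} \<subset> C'" by blast
    then obtain U where U: "U \<in> C'" "\<not> cvx U" by blast
    have sub: "subspace U" "Z \<subseteq> U" "U \<subseteq> W" using C'(1) U(1) unfolding quot_chain_def by auto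
    have "cvx U"
    proof (rule cvx_max[OF sub])
      fix G assume "cvx G"
      hence "G \<in> C'" using C'(2) by blast
      thus "G \<subseteq> U \<or> U \<subseteq> G" using C'(1) U(1) unfolding quot_chain_def by blast
    qed
    thus False using U(2) by simp
  qed
  thus ?thesis using ch unfolding quot_max_chain_def by simp
qed


lemma line_cvx:
  assumes y: "y \<in> K" "y \<notin> Z"
  shows "cvx {a + t *\<^sub>R y | a t. a \<in> T y}"
proof -
  define B where "B = {a + t *\<^sub>R y | a t. a \<in> T y}"
  have A: "cvx (T y)" using T_cvx[OF y(1)] .
  have sB: "subspace B" unfolding B_def using line_subspace[OF cvxD(1)[OF A]] .
  have AB: "T y \<subseteq> B"
  proof
    fix x assume "x \<in> T y" thus "x \<in> B" unfolding B_def by (intro CollectI exI[of _ x] exI[of _ "0::real"]) auto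
  qed
  have yW: "y \<in> W" using y(1) KW by blast
  have BW: "B \<subseteq> W"
  proof
    fix x assume "x \<in> B"
    then obtain a t where at: "x = a + t *\<^sub>R y" "a \<in> T y" unfolding B_def by blast
    have "a \<in> W" using at(2) cvxD(3)[OF A] by blast
    moreover have "t *\<^sub>R y \<in> W" using real_vector.subspace_scale[OF sW yW] .
    ultimately show "x \<in> W" unfolding at(1) using real_vector.subspace_add[OF sW] by blast
  qed
  have ZB: "Z \<subseteq> B" using cvxD(2)[OF A] AB by blast
  have conv: "x \<in> B" if x: "x \<in> K" and bx: "b - x \<in> K" and b: "b \<in> B" for x b
  proof -
    obtain a s where as: "b = a + s *\<^sub>R y" "a \<in> T y" using b unfolding B_def by blast
    define r where "r = 1 + \<bar>s\<bar>"
    have r0: "0 \<le> r" unfolding r_def by simp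
    have ya: "y - 1 *\<^sub>R a \<in> K" using TD(2)[OF as(2), of 1] by simp
    have s1: "(\<bar>s\<bar> - s) *\<^sub>R y \<in> K" using Kscale[OF y(1)] by simp
    have k: "(b - x) + ((y - 1 *\<^sub>R a) + (\<bar>s\<bar> - s) *\<^sub>R y) \<in> K" using Kadd[OF bx Kadd[OF ya s1]] .
    have e: "(b - x) + ((y - 1 *\<^sub>R a) + (\<bar>s\<bar> - s) *\<^sub>R y) = r *\<^sub>R y - x"
      unfolding as(1) r_def by (simp add: algebra_simps)
    have h1: "r *\<^sub>R y - x \<in> K" using k unfolding e .
    have h2: "r *\<^sub>R y + x \<in> K" using Kadd[OF Kscale[OF y(1) r0] x] .
    have "x \<in> W" using x KW by blast
    then obtain c where c: "x - c *\<^sub>R y \<in> T y" using dedekind[OF y _ r0 h1 h2] by blast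
    have "x = (x - c *\<^sub>R y) + c *\<^sub>R y" by simp
    thus "x \<in> B" unfolding B_def using c by blast
  qed
  show ?thesis unfolding B_def[symmetric] cvx_def
    by (intro conjI allI impI sB ZB BW; rule conv; assumption)
qed

lemma some_v:
  assumes p: "codim_one_pair {G. cvx G} A B"
  shows "(SOME v. v \<in> B - A \<and> v \<in> K) \<in> B - A" "(SOME v. v \<in> B - A \<and> v \<in> K) \<in> K"
proof -
  have cA: "cvx A" and cB: "cvx B" and cod: "codim_one A B" using p unfolding codim_one_pair_def by auto
  obtain v0 where v0: "v0 \<notin> A" "B = {a + t *\<^sub>R v0 | a t. a \<in> A}" using cod unfolding codim_one_def by blast
  have z: "0 \<in> A" using real_vector.subspace_0[OF cvxD(1)[OF cA]] .
  have "v0 \<in> {a + t *\<^sub>R v0 | a t. a \<in> A}" using z by (intro CollectI exI[of _ 0] exI[of _ "1::real"]) auto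
  hence v0B: "v0 \<in> B" using v0(2) by simp
  have "- v0 \<in> {a + t *\<^sub>R v0 | a t. a \<in> A}" using z by (intro CollectI exI[of _ 0] exI[of _ "-1::real"]) auto
  hence nv0B: "- v0 \<in> B" using v0(2) by simp
  have nv0A: "- v0 \<notin> A"
  proof
    assume "- v0 \<in> A"
    hence "- (- v0) \<in> A" using real_vector.subspace_neg[OF cvxD(1)[OF cA]] by blast
    thus False using v0(1) by simp
  qed
  have "v0 \<in> W" using v0B cvxD(3)[OF cB] by blast
  hence "v0 \<in> K \<or> - v0 \<in> K" using Ktot by blast
  hence "\<exists>v. v \<in> B - A \<and> v \<in> K" using v0B v0(1) nv0B nv0A by blast
  hence "(SOME v. v \<in> B - A \<and> v \<in> K) \<in> B - A \<and> (SOME v. v \<in> B - A \<and> v \<in> K) \<in> K"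
    by (rule someI_ex)
  thus "(SOME v. v \<in> B - A \<and> v \<in> K) \<in> B - A" "(SOME v. v \<in> B - A \<and> v \<in> K) \<in> K" by auto
qed

lemma orient: "orientation {G. cvx G} ori"
  unfolding orientation_def
proof (intro allI impI)
  fix A B assume p: "codim_one_pair {G. cvx G} A B"
  show "half_space A B (ori A B)" unfolding half_space_def ori_def
    using some_v(1)[OF p] by blast
qed

lemma pos_K:
  assumes p: "chain_pos {G. cvx G} ori y" shows "y \<in> K" "y \<notin> Z"
proof -
  obtain A B where AB: "codim_one_pair {G. cvx G} A B" "y \<in> B - A" "y \<in> ori A B"
    using p unfolding chain_pos_def by blast
  define v where "v = (SOME v. v \<in> B - A \<and> v \<in> K)"
  have v: "v \<in> B - A" "v \<in> K" using some_v[OF AB(1)] unfolding v_def by auto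
  have cA: "cvx A" and cB: "cvx B" using AB(1) unfolding codim_one_pair_def by auto
  have "y \<in> {a + t *\<^sub>R v | a t. a \<in> A \<and> 0 < t}" using AB(3) unfolding ori_def v_def .
  then obtain a t where at: "y = a + t *\<^sub>R v" "a \<in> A" "0 < t" by blast
  show "y \<notin> Z" using AB(2) cvxD(2)[OF cA] by blast
  show "y \<in> K"
  proof (rule ccontr)
    assume nK: "y \<notin> K"
    have "y \<in> W" using AB(2) cvxD(3)[OF cB] by blast
    hence ny: "- y \<in> K" using Ktot nK by blast
    have tv: "t *\<^sub>R v \<in> K" using Kscale[OF v(2)] at(3) by simp
    have na: "- a \<in> A" using real_vector.subspace_neg[OF cvxD(1)[OF cA] at(2)] .
    have "- a - t *\<^sub>R v = - y" using at(1) by simp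
    hence "- a - t *\<^sub>R v \<in> K" using ny by simp
    hence "t *\<^sub>R v \<in> A" using cvxD(4)[OF cA tv _ na] by blast
    hence "(1/t) *\<^sub>R (t *\<^sub>R v) \<in> A" using real_vector.subspace_scale[OF cvxD(1)[OF cA]] by blast
    thus False using at(3) v(1) by simp
  qed
qed

lemma K_pos:
  assumes y: "y \<in> K" "y \<notin> Z" shows "chain_pos {G. cvx G} ori y"
proof -
  define A where "A = T y"
  define B where "B = {a + t *\<^sub>R y | a t. a \<in> A}"
  have cA: "cvx A" unfolding A_def using T_cvx[OF y(1)] .
  have cB: "cvx B" unfolding B_def A_def using line_cvx[OF y] .
  have yA: "y \<notin> A" unfolding A_def using y_notin_T[OF y] .
  have AB: "A \<subseteq> B"
  proof
    fix x assume "x \<in> A" thus "x \<in> B" unfolding B_def by (intro CollectI exI[of _ x] exI[of _ "0::real"]) auto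
  qed
  have z: "0 \<in> A" using real_vector.subspace_0[OF cvxD(1)[OF cA]] .
  have yB: "y \<in> B" unfolding B_def using z by (intro CollectI exI[of _ 0] exI[of _ "1::real"]) auto
  have cod: "codim_one A B" unfolding codim_one_def
  proof (intro conjI exI[of _ y])
    show "A \<subseteq> B" by (rule AB)
    show "y \<notin> A" by (rule yA)
    show "B = {a + t *\<^sub>R y | a t. a \<in> A}" by (rule B_def)
  qed
  have p: "codim_one_pair {G. cvx G} A B" unfolding codim_one_pair_def using cA cB cod by simp
  define v where "v = (SOME v. v \<in> B - A \<and> v \<in> K)"
  have v: "v \<in> B - A" "v \<in> K" using some_v[OF p] unfolding v_def by auto
  obtain a0 s where as: "v = a0 + s *\<^sub>R y" "a0 \<in> A" using v(1) unfolding B_def by blast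
  have "s \<noteq> 0" using as v(1) by auto
  have "s > 0"
  proof (rule ccontr)
    assume "\<not> s > 0"
    hence "0 < - s" using \<open>s \<noteq> 0\<close> by simp
    have "(- s) *\<^sub>R y \<in> K" by (rule Kscale[OF y(1)]) (use \<open>0 < - s\<close> in simp)
    moreover have "a0 - v = (- s) *\<^sub>R y" using as(1) by simp
    ultimately have "a0 - v \<in> K" by simp
    hence "v \<in> A" using cvxD(4)[OF cA v(2) _ as(2)] by blast
    thus False using v(1) by blast
  qed
  have ya: "y = (- (1/s)) *\<^sub>R a0 + (1/s) *\<^sub>R v" using as \<open>s \<noteq> 0\<close> by (simp add: algebra_simps)
  have a1: "(- (1/s)) *\<^sub>R a0 \<in> A" using real_vector.subspace_scale[OF cvxD(1)[OF cA] as(2)] .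
  have "y \<in> {a + t *\<^sub>R v | a t. a \<in> A \<and> 0 < t}" by (rule mem_half[OF a1 _ ya]) (use \<open>s > 0\<close> in simp)
  hence "y \<in> ori A B" unfolding ori_def v_def .
  thus ?thesis using pos_intro2[OF p] yB yA by blast
qed

end


lemma exists_K:
  fixes Z W K0 :: "'v::real_vector set"
  assumes sZ: "subspace Z" and sW: "subspace W" and ZK0: "Z \<subseteq> K0" and K0W: "K0 \<subseteq> W"
    and add0: "\<And>x y. x \<in> K0 \<Longrightarrow> y \<in> K0 \<Longrightarrow> x + y \<in> K0"
    and scale0: "\<And>x t. x \<in> K0 \<Longrightarrow> 0 \<le> t \<Longrightarrow> t *\<^sub>R x \<in> K0"
    and pt0: "\<And>x. x \<in> K0 \<Longrightarrow> - x \<in> K0 \<Longrightarrow> x \<in> Z"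
  shows "\<exists>K. K0 \<subseteq> K \<and> ordc Z W K"
proof -
  define pc where "pc K \<longleftrightarrow> Z \<subseteq> K \<and> K \<subseteq> W \<and> (\<forall>x\<in>K. \<forall>y\<in>K. x + y \<in> K) \<and>
      (\<forall>x\<in>K. \<forall>t. 0 \<le> t \<longrightarrow> t *\<^sub>R x \<in> K) \<and> (\<forall>x. x \<in> K \<and> - x \<in> K \<longrightarrow> x \<in> Z)" for K
  define \<A> where "\<A> = {K. K0 \<subseteq> K \<and> pc K}"
  have K0A: "K0 \<in> \<A>" unfolding \<A>_def pc_def using ZK0 K0W add0 scale0 pt0 by blast
  have "\<exists>M\<in>\<A>. \<forall>X\<in>\<A>. M \<subseteq> X \<longrightarrow> X = M"
  proof (rule subset_Zorn_nonempty)
    show "\<A> \<noteq> {}" using K0A by blast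
  next
    fix \<C> assume ne: "\<C> \<noteq> {}" and ch: "subset.chain \<A> \<C>"
    have CA: "\<C> \<subseteq> \<A>" and cmp: "\<And>X Y. X \<in> \<C> \<Longrightarrow> Y \<in> \<C> \<Longrightarrow> X \<subseteq> Y \<or> Y \<subseteq> X"
      using ch unfolding subset_chain_def by auto
    have mem: "\<And>X. X \<in> \<C> \<Longrightarrow> K0 \<subseteq> X \<and> pc X" using CA unfolding \<A>_def by blast
    obtain X0 where X0: "X0 \<in> \<C>" using ne by blast
    have big: "\<exists>X\<in>\<C>. x \<in> X \<and> y \<in> X" if xy: "x \<in> \<Union>\<C>" "y \<in> \<Union>\<C>" for x y
    proof -
      obtain X Y where XY: "X \<in> \<C>" "x \<in> X" "Y \<in> \<C>" "y \<in> Y" using xy by blast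
      show ?thesis using cmp[OF XY(1,3)] XY by blast
    qed
    have "K0 \<subseteq> \<Union>\<C>" using mem X0 by blast
    moreover have "pc (\<Union>\<C>)"
      unfolding pc_def
    proof (intro conjI ballI allI impI)
      show "Z \<subseteq> \<Union>\<C>" using mem[OF X0] X0 unfolding pc_def by blast
      show "\<Union>\<C> \<subseteq> W" using mem unfolding pc_def by blast
    next
      fix x y assume "x \<in> \<Union>\<C>" "y \<in> \<Union>\<C>"
      then obtain X where "X \<in> \<C>" "x \<in> X" "y \<in> X" using big by blast
      moreover have "pc X" using mem calculation(1) by blast
      ultimately show "x + y \<in> \<Union>\<C>" unfolding pc_def by blast
    next
      fix x and t :: real assume "x \<in> \<Union>\<C>" "0 \<le> t"
      then obtain X where "X \<in> \<C>" "x \<in> X" by blast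
      moreover have "pc X" using mem calculation(1) by blast
      ultimately show "t *\<^sub>R x \<in> \<Union>\<C>" unfolding pc_def using \<open>0 \<le> t\<close> by blast
    next
      fix x assume "x \<in> \<Union>\<C> \<and> - x \<in> \<Union>\<C>"
      then obtain X where "X \<in> \<C>" "x \<in> X" "- x \<in> X" using big by blast
      moreover have "pc X" using mem calculation(1) by blast
      ultimately show "x \<in> Z" unfolding pc_def by blast
    qed
    ultimately show "\<Union>\<C> \<in> \<A>" unfolding \<A>_def by blast
  qed
  then obtain M where MA: "M \<in> \<A>" and Mmax: "\<And>X. X \<in> \<A> \<Longrightarrow> M \<subseteq> X \<Longrightarrow> X = M" by blast
  have K0M: "K0 \<subseteq> M" and pM: "pc M" using MA unfolding \<A>_def by auto
  have ZM: "Z \<subseteq> M" and MW: "M \<subseteq> W" and Madd: "\<And>x y. x \<in> M \<Longrightarrow> y \<in> M \<Longrightarrow> x + y \<in> M"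
    and Mscale: "\<And>x t. x \<in> M \<Longrightarrow> 0 \<le> t \<Longrightarrow> t *\<^sub>R x \<in> M"
    and Mpt: "\<And>x. x \<in> M \<Longrightarrow> - x \<in> M \<Longrightarrow> x \<in> Z"
    using pM unfolding pc_def by blast+
  have tot: "x \<in> M \<or> - x \<in> M" if xW: "x \<in> W" for x
  proof (rule ccontr)
    assume nx: "\<not> (x \<in> M \<or> - x \<in> M)"
    define M' where "M' = {k + t *\<^sub>R x | k t. k \<in> M \<and> 0 \<le> t}"
    have M'I: "k + t *\<^sub>R x \<in> M'" if "k \<in> M" "0 \<le> t" for k t unfolding M'_def using that by blast
    have MM': "M \<subseteq> M'"
    proof
      fix k assume "k \<in> M" thus "k \<in> M'" using M'I[of k 0] by simp
    qed
    have z: "0 \<in> M" using ZM real_vector.subspace_0[OF sZ] by blast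
    have xM': "x \<in> M'" using M'I[OF z, of 1] by simp
    have "pc M'"
      unfolding pc_def
    proof (intro conjI ballI allI impI)
      show "Z \<subseteq> M'" using ZM MM' by blast
      show "M' \<subseteq> W"
      proof
        fix u assume "u \<in> M'"
        then obtain k t where "u = k + t *\<^sub>R x" "k \<in> M" unfolding M'_def by blast
        moreover have "k \<in> W" using calculation(2) MW by blast
        moreover have "t *\<^sub>R x \<in> W" using real_vector.subspace_scale[OF sW xW] .
        ultimately show "u \<in> W" using real_vector.subspace_add[OF sW] by blast
      qed
    next
      fix u v assume "u \<in> M'" "v \<in> M'"
      then obtain k1 t1 k2 t2 where h: "u = k1 + t1 *\<^sub>R x" "k1 \<in> M" "0 \<le> t1"
        "v = k2 + t2 *\<^sub>R x" "k2 \<in> M" "0 \<le> t2" unfolding M'_def by blast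
      have "u + v = (k1 + k2) + (t1 + t2) *\<^sub>R x" using h by (simp add: algebra_simps)
      thus "u + v \<in> M'" using M'I[OF Madd[OF h(2) h(5)]] h(3,6) by simp
    next
      fix u and c :: real assume "u \<in> M'" "0 \<le> c"
      then obtain k t where h: "u = k + t *\<^sub>R x" "k \<in> M" "0 \<le> t" unfolding M'_def by blast
      have "c *\<^sub>R u = c *\<^sub>R k + (c * t) *\<^sub>R x" using h by (simp add: algebra_simps)
      thus "c *\<^sub>R u \<in> M'" using M'I[OF Mscale[OF h(2) \<open>0 \<le> c\<close>]] h(3) \<open>0 \<le> c\<close> by simp
    next
      fix u assume "u \<in> M' \<and> - u \<in> M'"
      then obtain k1 t1 k2 t2 where h: "u = k1 + t1 *\<^sub>R x" "k1 \<in> M" "0 \<le> t1"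
        "- u = k2 + t2 *\<^sub>R x" "k2 \<in> M" "0 \<le> t2" unfolding M'_def by blast
      have sum0: "(k1 + k2) + (t1 + t2) *\<^sub>R x = 0"
      proof -
        have "(k1 + k2) + (t1 + t2) *\<^sub>R x = (k1 + t1 *\<^sub>R x) + (k2 + t2 *\<^sub>R x)" by (simp add: algebra_simps)
        also have "\<dots> = u + - u" using h(1,4) by simp
        finally show ?thesis by simp
      qed
      show "u \<in> Z"
      proof (cases "t1 + t2 = 0")
        case True
        hence "t1 = 0" "t2 = 0" using h(3,6) by auto
        hence "u \<in> M" "- u \<in> M" using h by auto
        thus ?thesis using Mpt by blast
      next
        case False
        hence pos: "0 < t1 + t2" using h(3,6) by simp
        have "(1 / (t1 + t2)) *\<^sub>R (k1 + k2) \<in> M" using Mscale[OF Madd[OF h(2) h(5)]] pos by simp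
        moreover have "(1 / (t1 + t2)) *\<^sub>R (k1 + k2) = - x"
        proof -
          have "k1 + k2 = - ((t1 + t2) *\<^sub>R x)" using sum0 by (simp add: eq_neg_iff_add_eq_0)
          thus ?thesis using pos by simp
        qed
        ultimately show ?thesis using nx by simp
      qed
    qed
    hence "M' \<in> \<A>" using K0M MM' unfolding \<A>_def by blast
    hence "M' = M" using Mmax MM' by blast
    thus False using xM' nx by blast
  qed
  have "ordc Z W M"
    by (unfold_locales) (use sZ sW ZM MW Madd Mscale Mpt tot in auto)
  thus ?thesis using K0M by blast
qed


lemma part1:
  fixes \<Delta> :: "'v::real_vector set"
  assumes par: "parabolic \<Delta> Dm D0 Dp"
  shows "\<exists>C ori. oriented_max_chain (span \<Delta>) (span D0) C ori \<and>
                    Dm = assoc_minus \<Delta> (span D0) C ori \<and>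
                    D0 = \<Delta> \<inter> span D0 \<and>
                    Dp = assoc_plus \<Delta> (span D0) C ori"
proof -
  define Z where "Z = span D0"
  define W where "W = span \<Delta>"
  define P where "P = Dp \<union> uminus ` Dm"
  define K0 where "K0 = {k + w | k w. k \<in> nonneg_comb P \<and> w \<in> Z}"
  note pd = par[unfolded parabolic_def]
  have cov: "\<Delta> = Dm \<union> D0 \<union> Dp" using pd by (elim conjE) assumption
  have mZ: "\<forall>a\<in>Dm. a \<notin> Z" unfolding Z_def using pd by (elim conjE) assumption
  have pZ: "\<forall>b\<in>Dp. b \<notin> Z" unfolding Z_def using pd by (elim conjE) assumption
  have nocone: "\<not> (\<exists>S. subspace S \<and> Z \<subset> S \<and> S \<subseteq> K0)"
    unfolding Z_def K0_def P_def using pd by (elim conjE) assumption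
  have covI: "\<And>x. x \<in> \<Delta> \<Longrightarrow> x \<in> Dm \<or> x \<in> D0 \<or> x \<in> Dp"
  proof -
    fix x assume "x \<in> \<Delta>"
    hence "x \<in> Dm \<union> D0 \<union> Dp" by (subst cov[symmetric])
    thus "x \<in> Dm \<or> x \<in> D0 \<or> x \<in> Dp" by simp
  qed
  have subs: "Dm \<subseteq> \<Delta>" "D0 \<subseteq> \<Delta>" "Dp \<subseteq> \<Delta>" by (subst cov, rule subsetI, simp)+
  have sZ: "subspace Z" unfolding Z_def by (rule real_vector.subspace_span)
  have sW: "subspace W" unfolding W_def by (rule real_vector.subspace_span)
  have ZW: "Z \<subseteq> W" unfolding Z_def W_def using subs(2) by (rule real_vector.span_mono)
  have PW: "P \<subseteq> W"
  proof
    fix x assume "x \<in> P"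
    hence "x \<in> Dp \<or> - x \<in> Dm" unfolding P_def by auto
    hence "x \<in> \<Delta> \<or> - x \<in> \<Delta>" using subs by blast
    hence "x \<in> span \<Delta> \<or> - x \<in> span \<Delta>" using real_vector.span_superset by blast
    hence "x \<in> span \<Delta>" using real_vector.span_neg by fastforce
    thus "x \<in> W" unfolding W_def .
  qed
  have K0I: "k + w \<in> K0" if "k \<in> nonneg_comb P" "w \<in> Z" for k w unfolding K0_def using that by blast
  have K0E: "\<exists>k w. u = k + w \<and> k \<in> nonneg_comb P \<and> w \<in> Z" if "u \<in> K0" for u
    using that unfolding K0_def by blast
  have z0: "0 \<in> Z" using real_vector.subspace_0[OF sZ] .
  have ZK0: "Z \<subseteq> K0"
  proof
    fix w assume "w \<in> Z" thus "w \<in> K0" using K0I[OF nc_0] by (metis add_0)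
  qed
  have PK0: "P \<subseteq> K0"
  proof
    fix x assume "x \<in> P" thus "x \<in> K0" using K0I[OF nc_elem z0] by simp
  qed
  have K0W: "K0 \<subseteq> W"
  proof
    fix u assume "u \<in> K0"
    then obtain k w where h: "u = k + w" "k \<in> nonneg_comb P" "w \<in> Z" using K0E by blast
    have "k \<in> span P" using h(2) nc_span by blast
    hence "k \<in> W" using real_vector.span_minimal[OF PW sW] by blast
    moreover have "w \<in> W" using h(3) ZW by blast
    ultimately show "u \<in> W" unfolding h(1) using real_vector.subspace_add[OF sW] by blast
  qed
  have add0: "x + y \<in> K0" if xy: "x \<in> K0" "y \<in> K0" for x y
  proof -
    obtain k1 w1 where h1: "x = k1 + w1" "k1 \<in> nonneg_comb P" "w1 \<in> Z" using K0E xy(1) by blast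
    obtain k2 w2 where h2: "y = k2 + w2" "k2 \<in> nonneg_comb P" "w2 \<in> Z" using K0E xy(2) by blast
    have "x + y = (k1 + k2) + (w1 + w2)" using h1 h2 by (simp add: algebra_simps)
    thus ?thesis using K0I[OF nc_add[OF h1(2) h2(2)] real_vector.subspace_add[OF sZ h1(3) h2(3)]] by simp
  qed
  have scale0: "t *\<^sub>R x \<in> K0" if xt: "x \<in> K0" "0 \<le> t" for x t
  proof -
    obtain k w where h: "x = k + w" "k \<in> nonneg_comb P" "w \<in> Z" using K0E xt(1) by blast
    have "t *\<^sub>R x = t *\<^sub>R k + t *\<^sub>R w" using h by (simp add: scaleR_add_right)
    thus ?thesis using K0I[OF nc_scale[OF h(2) xt(2)] real_vector.subspace_scale[OF sZ h(3)]] by simp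
  qed
  have pt0: "x \<in> Z" if x: "x \<in> K0" and nx: "- x \<in> K0" for x
  proof (rule ccontr)
    assume xZ: "x \<notin> Z"
    define S where "S = {a + t *\<^sub>R x | a t. a \<in> Z}"
    have sS: "subspace S" unfolding S_def using line_subspace[OF sZ] .
    have ZS: "Z \<subseteq> S"
    proof
      fix w assume "w \<in> Z" thus "w \<in> S" unfolding S_def by (intro CollectI exI[of _ w] exI[of _ "0::real"]) auto
    qed
    have xS: "x \<in> S" unfolding S_def using z0 by (intro CollectI exI[of _ 0] exI[of _ "1::real"]) auto
    have SK: "S \<subseteq> K0"
    proof
      fix u assume "u \<in> S"
      then obtain a t where h: "u = a + t *\<^sub>R x" "a \<in> Z" unfolding S_def by blast
      have "t *\<^sub>R x \<in> K0"
      proof (cases "0 \<le> t")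
        case True thus ?thesis using scale0[OF x] by blast
      next
        case False
        hence "(- t) *\<^sub>R (- x) \<in> K0" using scale0[OF nx, of "- t"] by simp
        thus ?thesis by simp
      qed
      thus "u \<in> K0" unfolding h(1) using add0 ZK0 h(2) by (metis add.commute subsetD)
    qed
    have "subspace S \<and> Z \<subset> S \<and> S \<subseteq> K0" using sS ZS xS xZ SK by blast
    thus False using nocone by blast
  qed
  obtain K where K0K: "K0 \<subseteq> K" and oK: "ordc Z W K"
    using exists_K[OF sZ sW ZK0 K0W add0 scale0 pt0] by blast
  interpret ordc Z W K by (rule oK)
  have PK: "P \<subseteq> K" using PK0 K0K by blast
  have D0Z: "D0 \<subseteq> Z" unfolding Z_def by (rule real_vector.span_superset)
  have DW: "\<And>x. x \<in> \<Delta> \<Longrightarrow> x \<in> W" unfolding W_def using real_vector.span_superset by blast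
  have negZ: "\<And>x. - x \<in> Z \<Longrightarrow> x \<in> Z" using real_vector.subspace_neg[OF sZ] by fastforce
  have eqm: "Dm = assoc_minus \<Delta> Z {G. cvx G} ori"
  proof (rule set_eqI)
    fix x
    show "x \<in> Dm \<longleftrightarrow> x \<in> assoc_minus \<Delta> Z {G. cvx G} ori"
    proof
      assume x: "x \<in> Dm"
      have "- x \<in> P" unfolding P_def using x by blast
      hence "- x \<in> K" using PK by blast
      moreover have "- x \<notin> Z" using x mZ negZ by blast
      ultimately have "chain_pos {G. cvx G} ori (- x)" by (rule K_pos)
      thus "x \<in> assoc_minus \<Delta> Z {G. cvx G} ori" unfolding assoc_minus_def using x mZ subs by blast
    next
      assume "x \<in> assoc_minus \<Delta> Z {G. cvx G} ori"
      hence x: "x \<in> \<Delta>" "x \<notin> Z" "chain_pos {G. cvx G} ori (- x)" unfolding assoc_minus_def by auto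
      have nK: "- x \<in> K" using pos_K(1)[OF x(3)] .
      have "x \<notin> Dp"
      proof
        assume "x \<in> Dp"
        hence "x \<in> K" using PK unfolding P_def by blast
        thus False using Kpt nK x(2) by blast
      qed
      moreover have "x \<notin> D0" using x(2) D0Z by blast
      ultimately show "x \<in> Dm" using covI[OF x(1)] by blast
    qed
  qed
  have eqp: "Dp = assoc_plus \<Delta> Z {G. cvx G} ori"
  proof (rule set_eqI)
    fix x
    show "x \<in> Dp \<longleftrightarrow> x \<in> assoc_plus \<Delta> Z {G. cvx G} ori"
    proof
      assume x: "x \<in> Dp"
      have "x \<in> P" unfolding P_def using x by blast
      hence "x \<in> K" using PK by blast
      moreover have "x \<notin> Z" using x pZ by blast
      ultimately have "chain_pos {G. cvx G} ori x" by (rule K_pos)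
      thus "x \<in> assoc_plus \<Delta> Z {G. cvx G} ori" unfolding assoc_plus_def using x pZ subs by blast
    next
      assume "x \<in> assoc_plus \<Delta> Z {G. cvx G} ori"
      hence x: "x \<in> \<Delta>" "x \<notin> Z" "chain_pos {G. cvx G} ori x" unfolding assoc_plus_def by auto
      have xK: "x \<in> K" using pos_K(1)[OF x(3)] .
      have "x \<notin> Dm"
      proof
        assume "x \<in> Dm"
        hence "- x \<in> K" using PK unfolding P_def by blast
        thus False using Kpt xK x(2) by blast
      qed
      moreover have "x \<notin> D0" using x(2) D0Z by blast
      ultimately show "x \<in> Dp" using covI[OF x(1)] by blast
    qed
  qed
  have eq0: "D0 = \<Delta> \<inter> Z"
  proof
    show "D0 \<subseteq> \<Delta> \<inter> Z" using subs(2) D0Z by blast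
    show "\<Delta> \<inter> Z \<subseteq> D0"
    proof
      fix x assume "x \<in> \<Delta> \<inter> Z"
      thus "x \<in> D0" using covI[of x] mZ pZ by blast
    qed
  qed
  have om: "oriented_max_chain W Z {G. cvx G} ori"
    unfolding oriented_max_chain_def using qmc orient by blast
  show ?thesis using om eqm eqp eq0 unfolding Z_def W_def by blast
qed

theorem theorem10:
  fixes \<Delta> :: "'v::real_vector set"
  assumes "0 \<notin> \<Delta>"
  shows "(\<forall>Dm D0 Dp. parabolic \<Delta> Dm D0 Dp \<longrightarrow>
            (\<exists>C ori. oriented_max_chain (span \<Delta>) (span D0) C ori \<and>
                    Dm = assoc_minus \<Delta> (span D0) C ori \<and>
                    D0 = \<Delta> \<inter> span D0 \<and>
                    Dp = assoc_plus \<Delta> (span D0) C ori))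
       \<and> (\<forall>V' C ori. subspace V' \<and> V' \<subseteq> span \<Delta> \<and> oriented_max_chain (span \<Delta>) V' C ori \<longrightarrow>
            parabolic \<Delta> (assoc_minus \<Delta> V' C ori) (\<Delta> \<inter> V') (assoc_plus \<Delta> V' C ori))"
proof (intro conjI allI impI)
  fix Dm D0 Dp assume "parabolic \<Delta> Dm D0 Dp"
  thus "\<exists>C ori. oriented_max_chain (span \<Delta>) (span D0) C ori \<and>
                    Dm = assoc_minus \<Delta> (span D0) C ori \<and>
                    D0 = \<Delta> \<inter> span D0 \<and>
                    Dp = assoc_plus \<Delta> (span D0) C ori" by (rule part1)
next
  fix V' C ori assume h: "subspace V' \<and> V' \<subseteq> span \<Delta> \<and> oriented_max_chain (span \<Delta>) V' C ori"
  from h have a: "subspace V'" and b: "V' \<subseteq> span \<Delta>" and c: "oriented_max_chain (span \<Delta>) V' C ori"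
    by simp_all
  show "parabolic \<Delta> (assoc_minus \<Delta> V' C ori) (\<Delta> \<inter> V') (assoc_plus \<Delta> V' C ori)"
    by (rule part2[OF a b c])
qed


end
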